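(* For each positive integer $k$, let $z_k$ be the optimal value of the program \[ \max \frac{\sum_{j=1}^k \alpha_j}{f+\sum_{j=1}^k d_j}\ \text{ s.t. } \alpha_j\le\alpha_{j+1}\ (1\le j<k);\ \sqrt{\alpha_j}\le\sqrt{\alpha_l}+\sqrt{d_j}+\sqrt{d_l}\ (1\le j,l\le k);\ \sum_{l=j}^k\max(\alpha_j-d_l,0)\le f\ (1\le j\le k);\ \alpha_j,d_j,f\ge0. \] Then $\sup_{k \ge 1} z_k \ge 2.86$.
   Context: The maximum is taken over feasible points with $f+\sum_j d_j>0$. *)

theory Defs
  imports Complex_Main "HOL-Library.Extended_Real"
begin

definition feasible :: "nat \<Rightarrow> (nat \<Rightarrow> real) \<Rightarrow> (nat \<Rightarrow> real) \<Rightarrow> real \<Rightarrow> bool" where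
  "feasible k \<alpha> d f \<longleftrightarrow>
     (\<forall>j. 1 \<le> j \<and> j < k \<longrightarrow> \<alpha> j \<le> \<alpha> (j + 1)) \<and>
     (\<forall>j\<in>{1..k}. \<forall>l\<in>{1..k}. sqrt (\<alpha> j) \<le> sqrt (\<alpha> l) + sqrt (d j) + sqrt (d l)) \<and>
     (\<forall>j\<in>{1..k}. (\<Sum>l=j..k. max (\<alpha> j - d l) 0) \<le> f) \<and>
     (\<forall>j\<in>{1..k}. 0 \<le> \<alpha> j \<and> 0 \<le> d j) \<and> 0 \<le> f"

definition zval :: "nat \<Rightarrow> ereal" where
  "zval k = (SUP p \<in> {(\<alpha>, d, f). feasible k \<alpha> d f \<and> f + (\<Sum>j=1..k. d j) > 0}.
      ereal ((\<Sum>j=1..k. fst p j) / (snd (snd p) + (\<Sum>j=1..k. fst (snd p) j))))"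

end

theory Submission
  imports Defs
begin

lemma tele:
  fixes P g :: "nat \<Rightarrow> int"
  assumes Pd: "\<And>l. 1 \<le> l \<Longrightarrow> l \<le> k \<Longrightarrow> P l = P (l-1) + g l"
  shows "1 \<le> j \<Longrightarrow> j \<le> p + 1 \<Longrightarrow> p \<le> k \<Longrightarrow> (\<Sum>l=j..p. g l) = P p - P (j-1)"
proof (induction p)
  case 0
  then have "j = 1" by simp
  then show ?case by simp
next
  case (Suc p)
  show ?case
  proof (cases "j = Suc p + 1")
    case True then show ?thesis by simp
  next
    case False
    then have jp: "j \<le> Suc p" using Suc.prems by simp
    then have "(\<Sum>l=j..Suc p. g l) = (\<Sum>l=j..p. g l) + g (Suc p)"
      by (simp add: sum.cl_ivl_Suc)
    also have "(\<Sum>l=j..p. g l) = P p - P (j-1)" using Suc jp by simp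
    also have "P (Suc p) = P p + g (Suc p)" using Pd[of "Suc p"] Suc.prems by simp
    ultimately show ?thesis by simp
  qed
qed

lemma mono_up:
  fixes E :: "nat \<Rightarrow> int"
  assumes inc: "\<And>l. t \<le> l \<Longrightarrow> l < k \<Longrightarrow> E l \<le> E (l+1)"
  shows "t \<le> l1 \<Longrightarrow> l1 \<le> l2 \<Longrightarrow> l2 \<le> k \<Longrightarrow> E l1 \<le> E l2"
proof (induction l2)
  case 0 then show ?case by simp
next
  case (Suc l2)
  show ?case
  proof (cases "l1 = Suc l2")
    case True then show ?thesis by simp
  next
    case False
    then have "E l1 \<le> E l2" using Suc by simp
    moreover have "E l2 \<le> E (l2+1)" using inc[of l2] Suc.prems False by simp
    ultimately show ?thesis by simp
  qed
qed

lemma mono_down: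
  fixes E :: "nat \<Rightarrow> int"
  assumes dec: "\<And>l. 1 \<le> l \<Longrightarrow> l < t \<Longrightarrow> E (l+1) \<le> E l"
  shows "1 \<le> l1 \<Longrightarrow> l1 \<le> l2 \<Longrightarrow> l2 \<le> t \<Longrightarrow> E l2 \<le> E l1"
proof (induction l2)
  case 0 then show ?case by simp
next
  case (Suc l2)
  show ?case
  proof (cases "l1 = Suc l2")
    case True then show ?thesis by simp
  next
    case False
    then have "E l2 \<le> E l1" using Suc by simp
    moreover have "E (l2+1) \<le> E l2" using dec[of l2] Suc.prems False by simp
    ultimately show ?thesis by simp
  qed
qed

lemma sq_mono: "0 \<le> (x::int) \<Longrightarrow> x \<le> y \<Longrightarrow> x * x \<le> y * y"
  by (simp add: mult_mono)

lemma fac_cert: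
  fixes E P :: "nat \<Rightarrow> int" and a f :: int
  assumes dec: "\<And>l. 1 \<le> l \<Longrightarrow> l < t \<Longrightarrow> E (l+1) \<le> E l"
    and inc: "\<And>l. t \<le> l \<Longrightarrow> l < k \<Longrightarrow> E l \<le> E (l+1)"
    and nonneg: "\<And>l. 1 \<le> l \<Longrightarrow> l \<le> k \<Longrightarrow> 0 \<le> E l"
    and Pd: "\<And>l. 1 \<le> l \<Longrightarrow> l \<le> k \<Longrightarrow> P l = P (l-1) + E l * E l"
    and j1: "1 \<le> j" and jp: "j \<le> p" and pk: "p \<le> k" and tp: "t \<le> p"
    and a1: "E j * E j \<le> a" and a2: "E p * E p \<le> a"
    and a3: "p = k \<or> a \<le> E (p+1) * E (p+1)"
    and cf: "int (p - j + 1) * a - (P p - P (j-1)) \<le> f"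
  shows "(\<Sum>l=j..k. max (a - E l * E l) 0) \<le> f"
proof -
  have lo: "E l * E l \<le> a" if l: "l \<in> {j..p}" for l
  proof (cases "l \<le> t")
    case True
    have "E l \<le> E j" using mono_down[where E=E and t=t, OF dec, of j l] j1 l True by simp
    moreover have "0 \<le> E l" using nonneg[of l] l j1 pk by simp
    ultimately have "E l * E l \<le> E j * E j" using sq_mono by blast
    then show ?thesis using a1 by simp
  next
    case False
    have "E l \<le> E p" using mono_up[where E=E and t=t and k=k, OF inc, of l p] l False pk by simp
    moreover have "0 \<le> E l" using nonneg[of l] l j1 pk by simp
    ultimately have "E l * E l \<le> E p * E p" using sq_mono by blast
    then show ?thesis using a2 by simp
  qed
  have hi: "a \<le> E l * E l" if l: "l \<in> {p+1..k}" for l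
  proof -
    have pk': "p < k" using l by simp
    then have a3': "a \<le> E (p+1) * E (p+1)" using a3 by simp
    have "E (p+1) \<le> E l" using mono_up[where E=E and t=t and k=k, OF inc, of "p+1" l] l tp by simp
    moreover have "0 \<le> E (p+1)" using nonneg[of "p+1"] pk' by simp
    ultimately have "E (p+1) * E (p+1) \<le> E l * E l" using sq_mono by blast
    then show ?thesis using a3' by simp
  qed
  have split: "{j..k} = {j..p} \<union> {p+1..k}" using jp pk by auto
  have "(\<Sum>l=j..k. max (a - E l * E l) 0) = (\<Sum>l=j..p. max (a - E l * E l) 0) + (\<Sum>l=p+1..k. max (a - E l * E l) 0)"
    unfolding split by (rule sum.union_disjoint) auto
  also have "(\<Sum>l=p+1..k. max (a - E l * E l) 0) = 0"
    using hi by (intro sum.neutral) auto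
  also have "(\<Sum>l=j..p. max (a - E l * E l) 0) = (\<Sum>l=j..p. a - E l * E l)"
    using lo by (intro sum.cong) auto
  also have "\<dots> = int (p - j + 1) * a - (\<Sum>l=j..p. E l * E l)"
    using jp by (simp add: sum_subtractf)
  also have "(\<Sum>l=j..p. E l * E l) = P p - P (j-1)"
    using tele[of k P "\<lambda>l. E l * E l" j p] Pd j1 jp pk by simp
  finally show ?thesis using cf by simp
qed


definition fU_b0 :: "nat \<Rightarrow> int" where "fU_b0 n = (if n \<le> 12 then (if n \<le> 6 then (if n \<le> 3 then (if n \<le> 2 then (if n \<le> 1 then 6286 else 6289) else 6292) else (if n \<le> 5 then (if n \<le> 4 then 6296 else 6299) else 6302)) else (if n \<le> 9 then (if n \<le> 8 then (if n \<le> 7 then 6306 else 6309) else 6312) else (if n \<le> 11 then (if n \<le> 10 then 6316 else 6319) else 6322))) else (if n \<le> 18 then (if n \<le> 15 then (if n \<le> 14 then (if n \<le> 13 then 6326 else 6329) else 6333) else (if n \<le> 17 then (if n \<le> 16 then 6336 else 6339) else 6343)) else (if n \<le> 21 then (if n \<le> 20 then (if n \<le> 19 then 6346 else 6350) else 6353) else (if n \<le> 23 then (if n \<le> 22 then 6357 else 6360) else 6364))))"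

definition fU_b1 :: "nat \<Rightarrow> int" where "fU_b1 n = (if n \<le> 36 then (if n \<le> 30 then (if n \<le> 27 then (if n \<le> 26 then (if n \<le> 25 then 6367 else 6371) else 6374) else (if n \<le> 29 then (if n \<le> 28 then 6378 else 6381) else 6385)) else (if n \<le> 33 then (if n \<le> 32 then (if n \<le> 31 then 6389 else 6392) else 6396) else (if n \<le> 35 then (if n \<le> 34 then 6400 else 6403) else 6407))) else (if n \<le> 42 then (if n \<le> 39 then (if n \<le> 38 then (if n \<le> 37 then 6411 else 6414) else 6418) else (if n \<le> 41 then (if n \<le> 40 then 6422 else 6425) else 6429)) else (if n \<le> 45 then (if n \<le> 44 then (if n \<le> 43 then 6433 else 6437) else 6441) else (if n \<le> 47 then (if n \<le> 46 then 6444 else 6448) else 6452))))"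

definition fU_b2 :: "nat \<Rightarrow> int" where "fU_b2 n = (if n \<le> 60 then (if n \<le> 54 then (if n \<le> 51 then (if n \<le> 50 then (if n \<le> 49 then 6456 else 6460) else 6464) else (if n \<le> 53 then (if n \<le> 52 then 6468 else 6471) else 6475)) else (if n \<le> 57 then (if n \<le> 56 then (if n \<le> 55 then 6479 else 6483) else 6487) else (if n \<le> 59 then (if n \<le> 58 then 6491 else 6495) else 6499))) else (if n \<le> 66 then (if n \<le> 63 then (if n \<le> 62 then (if n \<le> 61 then 6503 else 6507) else 6511) else (if n \<le> 65 then (if n \<le> 64 then 6515 else 6519) else 6524)) else (if n \<le> 69 then (if n \<le> 68 then (if n \<le> 67 then 6528 else 6532) else 6536) else (if n \<le> 71 then (if n \<le> 70 then 6540 else 6544) else 6548))))"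

definition fU_b3 :: "nat \<Rightarrow> int" where "fU_b3 n = (if n \<le> 84 then (if n \<le> 78 then (if n \<le> 75 then (if n \<le> 74 then (if n \<le> 73 then 6553 else 6557) else 6561) else (if n \<le> 77 then (if n \<le> 76 then 6565 else 6570) else 6574)) else (if n \<le> 81 then (if n \<le> 80 then (if n \<le> 79 then 6578 else 6583) else 6587) else (if n \<le> 83 then (if n \<le> 82 then 6591 else 6596) else 6600))) else (if n \<le> 90 then (if n \<le> 87 then (if n \<le> 86 then (if n \<le> 85 then 6604 else 6609) else 6613) else (if n \<le> 89 then (if n \<le> 88 then 6618 else 6622) else 6627)) else (if n \<le> 93 then (if n \<le> 92 then (if n \<le> 91 then 6631 else 6636) else 6640) else (if n \<le> 95 then (if n \<le> 94 then 6645 else 6649) else 6654))))"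

definition fU_b4 :: "nat \<Rightarrow> int" where "fU_b4 n = (if n \<le> 108 then (if n \<le> 102 then (if n \<le> 99 then (if n \<le> 98 then (if n \<le> 97 then 6659 else 6663) else 6668) else (if n \<le> 101 then (if n \<le> 100 then 6672 else 6677) else 6682)) else (if n \<le> 105 then (if n \<le> 104 then (if n \<le> 103 then 6687 else 6691) else 6696) else (if n \<le> 107 then (if n \<le> 106 then 6701 else 6706) else 6710))) else (if n \<le> 114 then (if n \<le> 111 then (if n \<le> 110 then (if n \<le> 109 then 6715 else 6720) else 6725) else (if n \<le> 113 then (if n \<le> 112 then 6730 else 6735) else 6740)) else (if n \<le> 117 then (if n \<le> 116 then (if n \<le> 115 then 6745 else 6749) else 6754) else (if n \<le> 119 then (if n \<le> 118 then 6759 else 6764) else 6769))))"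

definition fU_b5 :: "nat \<Rightarrow> int" where "fU_b5 n = (if n \<le> 132 then (if n \<le> 126 then (if n \<le> 123 then (if n \<le> 122 then (if n \<le> 121 then 6775 else 6780) else 6785) else (if n \<le> 125 then (if n \<le> 124 then 6790 else 6795) else 6800)) else (if n \<le> 129 then (if n \<le> 128 then (if n \<le> 127 then 6805 else 6810) else 6816) else (if n \<le> 131 then (if n \<le> 130 then 6821 else 6826) else 6831))) else (if n \<le> 138 then (if n \<le> 135 then (if n \<le> 134 then (if n \<le> 133 then 6837 else 6842) else 6847) else (if n \<le> 137 then (if n \<le> 136 then 6853 else 6858) else 6863)) else (if n \<le> 141 then (if n \<le> 140 then (if n \<le> 139 then 6869 else 6874) else 6880) else (if n \<le> 143 then (if n \<le> 142 then 6885 else 6891) else 6896))))"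

definition fU_b6 :: "nat \<Rightarrow> int" where "fU_b6 n = (if n \<le> 156 then (if n \<le> 150 then (if n \<le> 147 then (if n \<le> 146 then (if n \<le> 145 then 6902 else 6907) else 6913) else (if n \<le> 149 then (if n \<le> 148 then 6919 else 6924) else 6930)) else (if n \<le> 153 then (if n \<le> 152 then (if n \<le> 151 then 6936 else 6941) else 6947) else (if n \<le> 155 then (if n \<le> 154 then 6953 else 6959) else 6964))) else (if n \<le> 162 then (if n \<le> 159 then (if n \<le> 158 then (if n \<le> 157 then 6970 else 6976) else 6982) else (if n \<le> 161 then (if n \<le> 160 then 6988 else 6994) else 7000)) else (if n \<le> 165 then (if n \<le> 164 then (if n \<le> 163 then 7006 else 7012) else 7018) else (if n \<le> 167 then (if n \<le> 166 then 7024 else 7030) else 7036))))"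

definition fU_b7 :: "nat \<Rightarrow> int" where "fU_b7 n = (if n \<le> 180 then (if n \<le> 174 then (if n \<le> 171 then (if n \<le> 170 then (if n \<le> 169 then 7042 else 7048) else 7054) else (if n \<le> 173 then (if n \<le> 172 then 7060 else 7066) else 7073)) else (if n \<le> 177 then (if n \<le> 176 then (if n \<le> 175 then 7079 else 7085) else 7092) else (if n \<le> 179 then (if n \<le> 178 then 7098 else 7104) else 7111))) else (if n \<le> 186 then (if n \<le> 183 then (if n \<le> 182 then (if n \<le> 181 then 7117 else 7123) else 7130) else (if n \<le> 185 then (if n \<le> 184 then 7136 else 7143) else 7150)) else (if n \<le> 189 then (if n \<le> 188 then (if n \<le> 187 then 7156 else 7163) else 7169) else (if n \<le> 191 then (if n \<le> 190 then 7176 else 7183) else 7189))))"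

definition fU_b8 :: "nat \<Rightarrow> int" where "fU_b8 n = (if n \<le> 204 then (if n \<le> 198 then (if n \<le> 195 then (if n \<le> 194 then (if n \<le> 193 then 7196 else 7203) else 7210) else (if n \<le> 197 then (if n \<le> 196 then 7216 else 7223) else 7230)) else (if n \<le> 201 then (if n \<le> 200 then (if n \<le> 199 then 7237 else 7244) else 7251) else (if n \<le> 203 then (if n \<le> 202 then 7258 else 7265) else 7272))) else (if n \<le> 210 then (if n \<le> 207 then (if n \<le> 206 then (if n \<le> 205 then 7279 else 7286) else 7293) else (if n \<le> 209 then (if n \<le> 208 then 7301 else 7308) else 7315)) else (if n \<le> 213 then (if n \<le> 212 then (if n \<le> 211 then 7322 else 7330) else 7337) else (if n \<le> 215 then (if n \<le> 214 then 7344 else 7352) else 7359))))"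

definition fU_b9 :: "nat \<Rightarrow> int" where "fU_b9 n = (if n \<le> 228 then (if n \<le> 222 then (if n \<le> 219 then (if n \<le> 218 then (if n \<le> 217 then 7366 else 7374) else 7381) else (if n \<le> 221 then (if n \<le> 220 then 7389 else 7397) else 7404)) else (if n \<le> 225 then (if n \<le> 224 then (if n \<le> 223 then 7412 else 7419) else 7427) else (if n \<le> 227 then (if n \<le> 226 then 7435 else 7443) else 7450))) else (if n \<le> 234 then (if n \<le> 231 then (if n \<le> 230 then (if n \<le> 229 then 7458 else 7466) else 7474) else (if n \<le> 233 then (if n \<le> 232 then 7482 else 7490) else 7498)) else (if n \<le> 237 then (if n \<le> 236 then (if n \<le> 235 then 7506 else 7514) else 7522) else (if n \<le> 239 then (if n \<le> 238 then 7530 else 7538) else 7547))))"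

definition fU_b10 :: "nat \<Rightarrow> int" where "fU_b10 n = (if n \<le> 252 then (if n \<le> 246 then (if n \<le> 243 then (if n \<le> 242 then (if n \<le> 241 then 7555 else 7563) else 7572) else (if n \<le> 245 then (if n \<le> 244 then 7580 else 7588) else 7597)) else (if n \<le> 249 then (if n \<le> 248 then (if n \<le> 247 then 7605 else 7614) else 7622) else (if n \<le> 251 then (if n \<le> 250 then 7631 else 7639) else 7648))) else (if n \<le> 258 then (if n \<le> 255 then (if n \<le> 254 then (if n \<le> 253 then 7657 else 7665) else 7674) else (if n \<le> 257 then (if n \<le> 256 then 7683 else 7692) else 7701)) else (if n \<le> 261 then (if n \<le> 260 then (if n \<le> 259 then 7710 else 7719) else 7728) else (if n \<le> 263 then (if n \<le> 262 then 7737 else 7746) else 7755))))"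

definition fU_b11 :: "nat \<Rightarrow> int" where "fU_b11 n = (if n \<le> 276 then (if n \<le> 270 then (if n \<le> 267 then (if n \<le> 266 then (if n \<le> 265 then 7764 else 7773) else 7782) else (if n \<le> 269 then (if n \<le> 268 then 7792 else 7801) else 7810)) else (if n \<le> 273 then (if n \<le> 272 then (if n \<le> 271 then 7820 else 7829) else 7839) else (if n \<le> 275 then (if n \<le> 274 then 7848 else 7858) else 7867))) else (if n \<le> 282 then (if n \<le> 279 then (if n \<le> 278 then (if n \<le> 277 then 7877 else 7887) else 7896) else (if n \<le> 281 then (if n \<le> 280 then 7906 else 7916) else 7926)) else (if n \<le> 285 then (if n \<le> 284 then (if n \<le> 283 then 7936 else 7946) else 7956) else (if n \<le> 287 then (if n \<le> 286 then 7966 else 7976) else 7986))))"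

definition fU_b12 :: "nat \<Rightarrow> int" where "fU_b12 n = (if n \<le> 300 then (if n \<le> 294 then (if n \<le> 291 then (if n \<le> 290 then (if n \<le> 289 then 7996 else 8006) else 8017) else (if n \<le> 293 then (if n \<le> 292 then 8027 else 8037) else 8048)) else (if n \<le> 297 then (if n \<le> 296 then (if n \<le> 295 then 8058 else 8069) else 8079) else (if n \<le> 299 then (if n \<le> 298 then 8090 else 8101) else 8111))) else (if n \<le> 306 then (if n \<le> 303 then (if n \<le> 302 then (if n \<le> 301 then 8122 else 8133) else 8144) else (if n \<le> 305 then (if n \<le> 304 then 8155 else 8166) else 8177)) else (if n \<le> 309 then (if n \<le> 308 then (if n \<le> 307 then 8188 else 8199) else 8210) else (if n \<le> 311 then (if n \<le> 310 then 8221 else 8232) else 8244))))"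

definition fU_b13 :: "nat \<Rightarrow> int" where "fU_b13 n = (if n \<le> 324 then (if n \<le> 318 then (if n \<le> 315 then (if n \<le> 314 then (if n \<le> 313 then 8255 else 8266) else 8278) else (if n \<le> 317 then (if n \<le> 316 then 8289 else 8301) else 8313)) else (if n \<le> 321 then (if n \<le> 320 then (if n \<le> 319 then 8324 else 8336) else 8348) else (if n \<le> 323 then (if n \<le> 322 then 8360 else 8372) else 8384))) else (if n \<le> 330 then (if n \<le> 327 then (if n \<le> 326 then (if n \<le> 325 then 8396 else 8408) else 8420) else (if n \<le> 329 then (if n \<le> 328 then 8432 else 8444) else 8456)) else (if n \<le> 333 then (if n \<le> 332 then (if n \<le> 331 then 8469 else 8481) else 8494) else (if n \<le> 335 then (if n \<le> 334 then 8506 else 8519) else 8531))))"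

definition fU_b14 :: "nat \<Rightarrow> int" where "fU_b14 n = (if n \<le> 348 then (if n \<le> 342 then (if n \<le> 339 then (if n \<le> 338 then (if n \<le> 337 then 8544 else 8557) else 8570) else (if n \<le> 341 then (if n \<le> 340 then 8583 else 8595) else 8608)) else (if n \<le> 345 then (if n \<le> 344 then (if n \<le> 343 then 8622 else 8635) else 8648) else (if n \<le> 347 then (if n \<le> 346 then 8661 else 8674) else 8688))) else (if n \<le> 354 then (if n \<le> 351 then (if n \<le> 350 then (if n \<le> 349 then 8701 else 8715) else 8728) else (if n \<le> 353 then (if n \<le> 352 then 8742 else 8756) else 8769)) else (if n \<le> 357 then (if n \<le> 356 then (if n \<le> 355 then 8783 else 8797) else 8811) else (if n \<le> 359 then (if n \<le> 358 then 8825 else 8839) else 8853))))"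

definition fU_b15 :: "nat \<Rightarrow> int" where "fU_b15 n = (if n \<le> 372 then (if n \<le> 366 then (if n \<le> 363 then (if n \<le> 362 then (if n \<le> 361 then 8868 else 8882) else 8896) else (if n \<le> 365 then (if n \<le> 364 then 8911 else 8925) else 8940)) else (if n \<le> 369 then (if n \<le> 368 then (if n \<le> 367 then 8955 else 8969) else 8984) else (if n \<le> 371 then (if n \<le> 370 then 8999 else 9014) else 9029))) else (if n \<le> 378 then (if n \<le> 375 then (if n \<le> 374 then (if n \<le> 373 then 9044 else 9059) else 9074) else (if n \<le> 377 then (if n \<le> 376 then 9090 else 9105) else 9121)) else (if n \<le> 381 then (if n \<le> 380 then (if n \<le> 379 then 9136 else 9152) else 9168) else (if n \<le> 383 then (if n \<le> 382 then 9183 else 9199) else 9215))))"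

definition fU_b16 :: "nat \<Rightarrow> int" where "fU_b16 n = (if n \<le> 396 then (if n \<le> 390 then (if n \<le> 387 then (if n \<le> 386 then (if n \<le> 385 then 9231 else 9247) else 9263) else (if n \<le> 389 then (if n \<le> 388 then 9280 else 9296) else 9312)) else (if n \<le> 393 then (if n \<le> 392 then (if n \<le> 391 then 9329 else 9345) else 9362) else (if n \<le> 395 then (if n \<le> 394 then 9379 else 9396) else 9413))) else (if n \<le> 402 then (if n \<le> 399 then (if n \<le> 398 then (if n \<le> 397 then 9430 else 9447) else 9464) else (if n \<le> 401 then (if n \<le> 400 then 9481 else 9498) else 9516)) else (if n \<le> 405 then (if n \<le> 404 then (if n \<le> 403 then 9533 else 9551) else 9569) else (if n \<le> 407 then (if n \<le> 406 then 9587 else 9604) else 9622))))"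

definition fU_b17 :: "nat \<Rightarrow> int" where "fU_b17 n = (if n \<le> 420 then (if n \<le> 414 then (if n \<le> 411 then (if n \<le> 410 then (if n \<le> 409 then 9641 else 9659) else 9677) else (if n \<le> 413 then (if n \<le> 412 then 9695 else 9714) else 9732)) else (if n \<le> 417 then (if n \<le> 416 then (if n \<le> 415 then 9751 else 9770) else 9788) else (if n \<le> 419 then (if n \<le> 418 then 9807 else 9826) else 9846))) else (if n \<le> 426 then (if n \<le> 423 then (if n \<le> 422 then (if n \<le> 421 then 9865 else 9884) else 9903) else (if n \<le> 425 then (if n \<le> 424 then 9923 else 9943) else 9962)) else (if n \<le> 429 then (if n \<le> 428 then (if n \<le> 427 then 9982 else 10002) else 10022) else (if n \<le> 431 then (if n \<le> 430 then 10042 else 10063) else 10083))))"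

definition fU_b18 :: "nat \<Rightarrow> int" where "fU_b18 n = (if n \<le> 444 then (if n \<le> 438 then (if n \<le> 435 then (if n \<le> 434 then (if n \<le> 433 then 10103 else 10124) else 10145) else (if n \<le> 437 then (if n \<le> 436 then 10165 else 10186) else 10207)) else (if n \<le> 441 then (if n \<le> 440 then (if n \<le> 439 then 10228 else 10250) else 10271) else (if n \<le> 443 then (if n \<le> 442 then 10292 else 10314) else 10336))) else (if n \<le> 450 then (if n \<le> 447 then (if n \<le> 446 then (if n \<le> 445 then 10358 else 10380) else 10402) else (if n \<le> 449 then (if n \<le> 448 then 10424 else 10446) else 10469)) else (if n \<le> 453 then (if n \<le> 452 then (if n \<le> 451 then 10491 else 10514) else 10536) else (if n \<le> 455 then (if n \<le> 454 then 10559 else 10582) else 10606))))"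

definition fU_b19 :: "nat \<Rightarrow> int" where "fU_b19 n = (if n \<le> 468 then (if n \<le> 462 then (if n \<le> 459 then (if n \<le> 458 then (if n \<le> 457 then 10629 else 10652) else 10676) else (if n \<le> 461 then (if n \<le> 460 then 10699 else 10723) else 10747)) else (if n \<le> 465 then (if n \<le> 464 then (if n \<le> 463 then 10771 else 10795) else 10820) else (if n \<le> 467 then (if n \<le> 466 then 10844 else 10869) else 10894))) else (if n \<le> 474 then (if n \<le> 471 then (if n \<le> 470 then (if n \<le> 469 then 10918 else 10943) else 10969) else (if n \<le> 473 then (if n \<le> 472 then 10994 else 11015) else 11035)) else (if n \<le> 477 then (if n \<le> 476 then (if n \<le> 475 then 11055 else 11075) else 11095) else (if n \<le> 479 then (if n \<le> 478 then 11115 else 11136) else 11156))))"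

definition fU_b20 :: "nat \<Rightarrow> int" where "fU_b20 n = (if n \<le> 492 then (if n \<le> 486 then (if n \<le> 483 then (if n \<le> 482 then (if n \<le> 481 then 11177 else 11197) else 11218) else (if n \<le> 485 then (if n \<le> 484 then 11239 else 11260) else 11281)) else (if n \<le> 489 then (if n \<le> 488 then (if n \<le> 487 then 11302 else 11324) else 11345) else (if n \<le> 491 then (if n \<le> 490 then 11367 else 11388) else 11410))) else (if n \<le> 498 then (if n \<le> 495 then (if n \<le> 494 then (if n \<le> 493 then 11432 else 11454) else 11476) else (if n \<le> 497 then (if n \<le> 496 then 11499 else 11521) else 11544)) else (if n \<le> 501 then (if n \<le> 500 then (if n \<le> 499 then 11566 else 11589) else 11612) else (if n \<le> 503 then (if n \<le> 502 then 11635 else 11658) else 11681))))"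

definition fU_b21 :: "nat \<Rightarrow> int" where "fU_b21 n = (if n \<le> 516 then (if n \<le> 510 then (if n \<le> 507 then (if n \<le> 506 then (if n \<le> 505 then 11705 else 11728) else 11752) else (if n \<le> 509 then (if n \<le> 508 then 11776 else 11800) else 11824)) else (if n \<le> 513 then (if n \<le> 512 then (if n \<le> 511 then 11848 else 11872) else 11897) else (if n \<le> 515 then (if n \<le> 514 then 11922 else 11946) else 11971))) else (if n \<le> 522 then (if n \<le> 519 then (if n \<le> 518 then (if n \<le> 517 then 11996 else 12022) else 12047) else (if n \<le> 521 then (if n \<le> 520 then 12072 else 12098) else 12124)) else (if n \<le> 525 then (if n \<le> 524 then (if n \<le> 523 then 12150 else 12176) else 12202) else (if n \<le> 527 then (if n \<le> 526 then 12229 else 12255) else 12282))))"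

definition fU_b22 :: "nat \<Rightarrow> int" where "fU_b22 n = (if n \<le> 540 then (if n \<le> 534 then (if n \<le> 531 then (if n \<le> 530 then (if n \<le> 529 then 12309 else 12336) else 12363) else (if n \<le> 533 then (if n \<le> 532 then 12391 else 12418) else 12446)) else (if n \<le> 537 then (if n \<le> 536 then (if n \<le> 535 then 12474 else 12502) else 12530) else (if n \<le> 539 then (if n \<le> 538 then 12559 else 12588) else 12616))) else (if n \<le> 546 then (if n \<le> 543 then (if n \<le> 542 then (if n \<le> 541 then 12645 else 12674) else 12704) else (if n \<le> 545 then (if n \<le> 544 then 12733 else 12763) else 12793)) else (if n \<le> 549 then (if n \<le> 548 then (if n \<le> 547 then 12823 else 12853) else 12884) else (if n \<le> 551 then (if n \<le> 550 then 12915 else 12946) else 12977))))"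

definition fU_b23 :: "nat \<Rightarrow> int" where "fU_b23 n = (if n \<le> 564 then (if n \<le> 558 then (if n \<le> 555 then (if n \<le> 554 then (if n \<le> 553 then 13008 else 13040) else 13071) else (if n \<le> 557 then (if n \<le> 556 then 13103 else 13135) else 13168)) else (if n \<le> 561 then (if n \<le> 560 then (if n \<le> 559 then 13200 else 13233) else 13266) else (if n \<le> 563 then (if n \<le> 562 then 13300 else 13333) else 13367))) else (if n \<le> 570 then (if n \<le> 567 then (if n \<le> 566 then (if n \<le> 565 then 13401 else 13435) else 13470) else (if n \<le> 569 then (if n \<le> 568 then 13504 else 13539) else 13574)) else (if n \<le> 573 then (if n \<le> 572 then (if n \<le> 571 then 13610 else 13645) else 13681) else (if n \<le> 575 then (if n \<le> 574 then 13718 else 13754) else 13791))))"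

definition fU_b24 :: "nat \<Rightarrow> int" where "fU_b24 n = (if n \<le> 588 then (if n \<le> 582 then (if n \<le> 579 then (if n \<le> 578 then (if n \<le> 577 then 13828 else 13865) else 13903) else (if n \<le> 581 then (if n \<le> 580 then 13941 else 13979) else 14017)) else (if n \<le> 585 then (if n \<le> 584 then (if n \<le> 583 then 14056 else 14095) else 14134) else (if n \<le> 587 then (if n \<le> 586 then 14174 else 14214) else 14254))) else (if n \<le> 594 then (if n \<le> 591 then (if n \<le> 590 then (if n \<le> 589 then 14294 else 14335) else 14376) else (if n \<le> 593 then (if n \<le> 592 then 14418 else 14460) else 14502)) else (if n \<le> 597 then (if n \<le> 596 then (if n \<le> 595 then 14544 else 14587) else 14630) else (if n \<le> 599 then (if n \<le> 598 then 14674 else 14718) else 14762))))"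

definition fU_b25 :: "nat \<Rightarrow> int" where "fU_b25 n = (if n \<le> 612 then (if n \<le> 606 then (if n \<le> 603 then (if n \<le> 602 then (if n \<le> 601 then 14806 else 14851) else 14897) else (if n \<le> 605 then (if n \<le> 604 then 14943 else 14989) else 15035)) else (if n \<le> 609 then (if n \<le> 608 then (if n \<le> 607 then 15082 else 15129) else 15177) else (if n \<le> 611 then (if n \<le> 610 then 15225 else 15274) else 15323))) else (if n \<le> 618 then (if n \<le> 615 then (if n \<le> 614 then (if n \<le> 613 then 15372 else 15422) else 15473) else (if n \<le> 617 then (if n \<le> 616 then 15524 else 15575) else 15627)) else (if n \<le> 621 then (if n \<le> 620 then (if n \<le> 619 then 15679 else 15731) else 15785) else (if n \<le> 623 then (if n \<le> 622 then 15838 else 15893) else 15947))))"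

definition fU_b26 :: "nat \<Rightarrow> int" where "fU_b26 n = (if n \<le> 636 then (if n \<le> 630 then (if n \<le> 627 then (if n \<le> 626 then (if n \<le> 625 then 16003 else 16058) else 16115) else (if n \<le> 629 then (if n \<le> 628 then 16172 else 16229) else 16287)) else (if n \<le> 633 then (if n \<le> 632 then (if n \<le> 631 then 16346 else 16405) else 16465) else (if n \<le> 635 then (if n \<le> 634 then 16525 else 16586) else 16648))) else (if n \<le> 642 then (if n \<le> 639 then (if n \<le> 638 then (if n \<le> 637 then 16710 else 16773) else 16837) else (if n \<le> 641 then (if n \<le> 640 then 16901 else 16967) else 17032)) else (if n \<le> 645 then (if n \<le> 644 then (if n \<le> 643 then 17099 else 17166) else 17234) else (if n \<le> 647 then (if n \<le> 646 then 17303 else 17372) else 17443))))"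

definition fU_b27 :: "nat \<Rightarrow> int" where "fU_b27 n = (if n \<le> 660 then (if n \<le> 654 then (if n \<le> 651 then (if n \<le> 650 then (if n \<le> 649 then 17514 else 17586) else 17659) else (if n \<le> 653 then (if n \<le> 652 then 17733 else 17807) else 17883)) else (if n \<le> 657 then (if n \<le> 656 then (if n \<le> 655 then 17959 else 18037) else 18115) else (if n \<le> 659 then (if n \<le> 658 then 18195 else 18275) else 18356))) else (if n \<le> 666 then (if n \<le> 663 then (if n \<le> 662 then (if n \<le> 661 then 18439 else 18522) else 18607) else (if n \<le> 665 then (if n \<le> 664 then 18693 else 18780) else 18868)) else (if n \<le> 669 then (if n \<le> 668 then (if n \<le> 667 then 18958 else 19048) else 19140) else (if n \<le> 671 then (if n \<le> 670 then 19234 else 19328) else 19424))))"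

definition fU_b28 :: "nat \<Rightarrow> int" where "fU_b28 n = (if n \<le> 684 then (if n \<le> 678 then (if n \<le> 675 then (if n \<le> 674 then (if n \<le> 673 then 19522 else 19621) else 19721) else (if n \<le> 677 then (if n \<le> 676 then 19823 else 19927) else 20032)) else (if n \<le> 681 then (if n \<le> 680 then (if n \<le> 679 then 20139 else 20247) else 20358) else (if n \<le> 683 then (if n \<le> 682 then 20470 else 20584) else 20701))) else (if n \<le> 690 then (if n \<le> 687 then (if n \<le> 686 then (if n \<le> 685 then 20819 else 20939) else 21000) else (if n \<le> 689 then (if n \<le> 688 then 21000 else 21000) else 21000)) else (if n \<le> 693 then (if n \<le> 692 then (if n \<le> 691 then 21000 else 21000) else 21000) else (if n \<le> 695 then (if n \<le> 694 then 21000 else 21000) else 21000))))"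

definition fU_b29 :: "nat \<Rightarrow> int" where "fU_b29 n = (if n \<le> 708 then (if n \<le> 702 then (if n \<le> 699 then (if n \<le> 698 then (if n \<le> 697 then 21000 else 21000) else 21000) else (if n \<le> 701 then (if n \<le> 700 then 21000 else 21000) else 21000)) else (if n \<le> 705 then (if n \<le> 704 then (if n \<le> 703 then 21000 else 21000) else 21000) else (if n \<le> 707 then (if n \<le> 706 then 21000 else 21000) else 21000))) else (if n \<le> 714 then (if n \<le> 711 then (if n \<le> 710 then (if n \<le> 709 then 21000 else 21000) else 21000) else (if n \<le> 713 then (if n \<le> 712 then 21000 else 21000) else 21000)) else (if n \<le> 717 then (if n \<le> 716 then (if n \<le> 715 then 21000 else 21000) else 21000) else (if n \<le> 719 then (if n \<le> 718 then 21000 else 21000) else 21000))))"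

definition fU_b30 :: "nat \<Rightarrow> int" where "fU_b30 n = (if n \<le> 732 then (if n \<le> 726 then (if n \<le> 723 then (if n \<le> 722 then (if n \<le> 721 then 21000 else 21000) else 21000) else (if n \<le> 725 then (if n \<le> 724 then 21000 else 21000) else 21000)) else (if n \<le> 729 then (if n \<le> 728 then (if n \<le> 727 then 21000 else 21000) else 21000) else (if n \<le> 731 then (if n \<le> 730 then 21000 else 21000) else 21000))) else (if n \<le> 738 then (if n \<le> 735 then (if n \<le> 734 then (if n \<le> 733 then 21000 else 21000) else 21000) else (if n \<le> 737 then (if n \<le> 736 then 21000 else 21000) else 21000)) else (if n \<le> 741 then (if n \<le> 740 then (if n \<le> 739 then 21000 else 21000) else 21000) else (if n \<le> 743 then (if n \<le> 742 then 21000 else 21000) else 21000))))"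

definition fU_b31 :: "nat \<Rightarrow> int" where "fU_b31 n = (if n \<le> 746 then (if n \<le> 745 then 21000 else 21000) else (if n \<le> 747 then 21000 else 21000))"

definition fU :: "nat \<Rightarrow> int" where "fU n = (if n \<le> 384 then (if n \<le> 192 then (if n \<le> 96 then (if n \<le> 48 then (if n \<le> 24 then fU_b0 n else fU_b1 n) else (if n \<le> 72 then fU_b2 n else fU_b3 n)) else (if n \<le> 144 then (if n \<le> 120 then fU_b4 n else fU_b5 n) else (if n \<le> 168 then fU_b6 n else fU_b7 n))) else (if n \<le> 288 then (if n \<le> 240 then (if n \<le> 216 then fU_b8 n else fU_b9 n) else (if n \<le> 264 then fU_b10 n else fU_b11 n)) else (if n \<le> 336 then (if n \<le> 312 then fU_b12 n else fU_b13 n) else (if n \<le> 360 then fU_b14 n else fU_b15 n)))) else (if n \<le> 576 then (if n \<le> 480 then (if n \<le> 432 then (if n \<le> 408 then fU_b16 n else fU_b17 n) else (if n \<le> 456 then fU_b18 n else fU_b19 n)) else (if n \<le> 528 then (if n \<le> 504 then fU_b20 n else fU_b21 n) else (if n \<le> 552 then fU_b22 n else fU_b23 n))) else (if n \<le> 672 then (if n \<le> 624 then (if n \<le> 600 then fU_b24 n else fU_b25 n) else (if n \<le> 648 then fU_b26 n else fU_b27 n)) else (if n \<le> 720 then (if n \<le> 696 then fU_b28 n else fU_b29 n) else (if n \<le> 744 then fU_b30 n else fU_b31 n)))))"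

lemmas fU_defs = fU_def fU_b0_def fU_b1_def fU_b2_def fU_b3_def fU_b4_def fU_b5_def fU_b6_def fU_b7_def fU_b8_def fU_b9_def fU_b10_def fU_b11_def fU_b12_def fU_b13_def fU_b14_def fU_b15_def fU_b16_def fU_b17_def fU_b18_def fU_b19_def fU_b20_def fU_b21_def fU_b22_def fU_b23_def fU_b24_def fU_b25_def fU_b26_def fU_b27_def fU_b28_def fU_b29_def fU_b30_def fU_b31_def

definition fE_b0 :: "nat \<Rightarrow> int" where "fE_b0 n = (if n \<le> 12 then (if n \<le> 6 then (if n \<le> 3 then (if n \<le> 2 then (if n \<le> 1 then 3714 else 3711) else 3708) else (if n \<le> 5 then (if n \<le> 4 then 3704 else 3701) else 3698)) else (if n \<le> 9 then (if n \<le> 8 then (if n \<le> 7 then 3694 else 3691) else 3688) else (if n \<le> 11 then (if n \<le> 10 then 3684 else 3681) else 3678))) else (if n \<le> 18 then (if n \<le> 15 then (if n \<le> 14 then (if n \<le> 13 then 3674 else 3671) else 3667) else (if n \<le> 17 then (if n \<le> 16 then 3664 else 3661) else 3657)) else (if n \<le> 21 then (if n \<le> 20 then (if n \<le> 19 then 3654 else 3650) else 3647) else (if n \<le> 23 then (if n \<le> 22 then 3643 else 3640) else 3636))))"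

definition fE_b1 :: "nat \<Rightarrow> int" where "fE_b1 n = (if n \<le> 36 then (if n \<le> 30 then (if n \<le> 27 then (if n \<le> 26 then (if n \<le> 25 then 3633 else 3629) else 3626) else (if n \<le> 29 then (if n \<le> 28 then 3622 else 3619) else 3615)) else (if n \<le> 33 then (if n \<le> 32 then (if n \<le> 31 then 3611 else 3608) else 3604) else (if n \<le> 35 then (if n \<le> 34 then 3600 else 3597) else 3593))) else (if n \<le> 42 then (if n \<le> 39 then (if n \<le> 38 then (if n \<le> 37 then 3589 else 3586) else 3582) else (if n \<le> 41 then (if n \<le> 40 then 3578 else 3575) else 3571)) else (if n \<le> 45 then (if n \<le> 44 then (if n \<le> 43 then 3567 else 3563) else 3559) else (if n \<le> 47 then (if n \<le> 46 then 3556 else 3552) else 3548))))"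

definition fE_b2 :: "nat \<Rightarrow> int" where "fE_b2 n = (if n \<le> 60 then (if n \<le> 54 then (if n \<le> 51 then (if n \<le> 50 then (if n \<le> 49 then 3544 else 3540) else 3536) else (if n \<le> 53 then (if n \<le> 52 then 3532 else 3529) else 3525)) else (if n \<le> 57 then (if n \<le> 56 then (if n \<le> 55 then 3521 else 3517) else 3513) else (if n \<le> 59 then (if n \<le> 58 then 3509 else 3505) else 3501))) else (if n \<le> 66 then (if n \<le> 63 then (if n \<le> 62 then (if n \<le> 61 then 3497 else 3493) else 3489) else (if n \<le> 65 then (if n \<le> 64 then 3485 else 3481) else 3476)) else (if n \<le> 69 then (if n \<le> 68 then (if n \<le> 67 then 3472 else 3468) else 3464) else (if n \<le> 71 then (if n \<le> 70 then 3460 else 3456) else 3452))))"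

definition fE_b3 :: "nat \<Rightarrow> int" where "fE_b3 n = (if n \<le> 84 then (if n \<le> 78 then (if n \<le> 75 then (if n \<le> 74 then (if n \<le> 73 then 3447 else 3443) else 3439) else (if n \<le> 77 then (if n \<le> 76 then 3435 else 3430) else 3426)) else (if n \<le> 81 then (if n \<le> 80 then (if n \<le> 79 then 3422 else 3417) else 3413) else (if n \<le> 83 then (if n \<le> 82 then 3409 else 3404) else 3400))) else (if n \<le> 90 then (if n \<le> 87 then (if n \<le> 86 then (if n \<le> 85 then 3396 else 3391) else 3387) else (if n \<le> 89 then (if n \<le> 88 then 3382 else 3378) else 3373)) else (if n \<le> 93 then (if n \<le> 92 then (if n \<le> 91 then 3369 else 3364) else 3360) else (if n \<le> 95 then (if n \<le> 94 then 3355 else 3351) else 3346))))"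

definition fE_b4 :: "nat \<Rightarrow> int" where "fE_b4 n = (if n \<le> 108 then (if n \<le> 102 then (if n \<le> 99 then (if n \<le> 98 then (if n \<le> 97 then 3341 else 3337) else 3332) else (if n \<le> 101 then (if n \<le> 100 then 3328 else 3323) else 3318)) else (if n \<le> 105 then (if n \<le> 104 then (if n \<le> 103 then 3313 else 3309) else 3304) else (if n \<le> 107 then (if n \<le> 106 then 3299 else 3294) else 3290))) else (if n \<le> 114 then (if n \<le> 111 then (if n \<le> 110 then (if n \<le> 109 then 3285 else 3280) else 3275) else (if n \<le> 113 then (if n \<le> 112 then 3270 else 3265) else 3260)) else (if n \<le> 117 then (if n \<le> 116 then (if n \<le> 115 then 3255 else 3251) else 3246) else (if n \<le> 119 then (if n \<le> 118 then 3241 else 3236) else 3231))))"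

definition fE_b5 :: "nat \<Rightarrow> int" where "fE_b5 n = (if n \<le> 132 then (if n \<le> 126 then (if n \<le> 123 then (if n \<le> 122 then (if n \<le> 121 then 3225 else 3220) else 3215) else (if n \<le> 125 then (if n \<le> 124 then 3210 else 3205) else 3200)) else (if n \<le> 129 then (if n \<le> 128 then (if n \<le> 127 then 3195 else 3190) else 3184) else (if n \<le> 131 then (if n \<le> 130 then 3179 else 3174) else 3169))) else (if n \<le> 138 then (if n \<le> 135 then (if n \<le> 134 then (if n \<le> 133 then 3163 else 3158) else 3153) else (if n \<le> 137 then (if n \<le> 136 then 3147 else 3142) else 3137)) else (if n \<le> 141 then (if n \<le> 140 then (if n \<le> 139 then 3131 else 3126) else 3120) else (if n \<le> 143 then (if n \<le> 142 then 3115 else 3109) else 3104))))"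

definition fE_b6 :: "nat \<Rightarrow> int" where "fE_b6 n = (if n \<le> 156 then (if n \<le> 150 then (if n \<le> 147 then (if n \<le> 146 then (if n \<le> 145 then 3098 else 3093) else 3087) else (if n \<le> 149 then (if n \<le> 148 then 3081 else 3076) else 3070)) else (if n \<le> 153 then (if n \<le> 152 then (if n \<le> 151 then 3064 else 3059) else 3053) else (if n \<le> 155 then (if n \<le> 154 then 3047 else 3041) else 3036))) else (if n \<le> 162 then (if n \<le> 159 then (if n \<le> 158 then (if n \<le> 157 then 3030 else 3024) else 3018) else (if n \<le> 161 then (if n \<le> 160 then 3012 else 3006) else 3000)) else (if n \<le> 165 then (if n \<le> 164 then (if n \<le> 163 then 2994 else 2988) else 2982) else (if n \<le> 167 then (if n \<le> 166 then 2976 else 2970) else 2964))))"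

definition fE_b7 :: "nat \<Rightarrow> int" where "fE_b7 n = (if n \<le> 180 then (if n \<le> 174 then (if n \<le> 171 then (if n \<le> 170 then (if n \<le> 169 then 2958 else 2952) else 2946) else (if n \<le> 173 then (if n \<le> 172 then 2940 else 2934) else 2927)) else (if n \<le> 177 then (if n \<le> 176 then (if n \<le> 175 then 2921 else 2915) else 2908) else (if n \<le> 179 then (if n \<le> 178 then 2902 else 2896) else 2889))) else (if n \<le> 186 then (if n \<le> 183 then (if n \<le> 182 then (if n \<le> 181 then 2883 else 2877) else 2870) else (if n \<le> 185 then (if n \<le> 184 then 2864 else 2857) else 2850)) else (if n \<le> 189 then (if n \<le> 188 then (if n \<le> 187 then 2844 else 2837) else 2831) else (if n \<le> 191 then (if n \<le> 190 then 2824 else 2817) else 2811))))"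

definition fE_b8 :: "nat \<Rightarrow> int" where "fE_b8 n = (if n \<le> 204 then (if n \<le> 198 then (if n \<le> 195 then (if n \<le> 194 then (if n \<le> 193 then 2804 else 2797) else 2790) else (if n \<le> 197 then (if n \<le> 196 then 2784 else 2777) else 2770)) else (if n \<le> 201 then (if n \<le> 200 then (if n \<le> 199 then 2763 else 2756) else 2749) else (if n \<le> 203 then (if n \<le> 202 then 2742 else 2735) else 2728))) else (if n \<le> 210 then (if n \<le> 207 then (if n \<le> 206 then (if n \<le> 205 then 2721 else 2714) else 2707) else (if n \<le> 209 then (if n \<le> 208 then 2699 else 2692) else 2685)) else (if n \<le> 213 then (if n \<le> 212 then (if n \<le> 211 then 2678 else 2670) else 2663) else (if n \<le> 215 then (if n \<le> 214 then 2656 else 2648) else 2641))))"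

definition fE_b9 :: "nat \<Rightarrow> int" where "fE_b9 n = (if n \<le> 228 then (if n \<le> 222 then (if n \<le> 219 then (if n \<le> 218 then (if n \<le> 217 then 2634 else 2626) else 2619) else (if n \<le> 221 then (if n \<le> 220 then 2611 else 2603) else 2596)) else (if n \<le> 225 then (if n \<le> 224 then (if n \<le> 223 then 2588 else 2581) else 2573) else (if n \<le> 227 then (if n \<le> 226 then 2565 else 2557) else 2550))) else (if n \<le> 234 then (if n \<le> 231 then (if n \<le> 230 then (if n \<le> 229 then 2542 else 2534) else 2526) else (if n \<le> 233 then (if n \<le> 232 then 2518 else 2510) else 2502)) else (if n \<le> 237 then (if n \<le> 236 then (if n \<le> 235 then 2494 else 2486) else 2478) else (if n \<le> 239 then (if n \<le> 238 then 2470 else 2462) else 2453))))"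

definition fE_b10 :: "nat \<Rightarrow> int" where "fE_b10 n = (if n \<le> 252 then (if n \<le> 246 then (if n \<le> 243 then (if n \<le> 242 then (if n \<le> 241 then 2445 else 2437) else 2428) else (if n \<le> 245 then (if n \<le> 244 then 2420 else 2412) else 2403)) else (if n \<le> 249 then (if n \<le> 248 then (if n \<le> 247 then 2395 else 2386) else 2378) else (if n \<le> 251 then (if n \<le> 250 then 2369 else 2361) else 2352))) else (if n \<le> 258 then (if n \<le> 255 then (if n \<le> 254 then (if n \<le> 253 then 2343 else 2335) else 2326) else (if n \<le> 257 then (if n \<le> 256 then 2317 else 2308) else 2299)) else (if n \<le> 261 then (if n \<le> 260 then (if n \<le> 259 then 2290 else 2281) else 2272) else (if n \<le> 263 then (if n \<le> 262 then 2263 else 2254) else 2245))))"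

definition fE_b11 :: "nat \<Rightarrow> int" where "fE_b11 n = (if n \<le> 276 then (if n \<le> 270 then (if n \<le> 267 then (if n \<le> 266 then (if n \<le> 265 then 2236 else 2227) else 2218) else (if n \<le> 269 then (if n \<le> 268 then 2208 else 2199) else 2190)) else (if n \<le> 273 then (if n \<le> 272 then (if n \<le> 271 then 2180 else 2171) else 2161) else (if n \<le> 275 then (if n \<le> 274 then 2152 else 2142) else 2133))) else (if n \<le> 282 then (if n \<le> 279 then (if n \<le> 278 then (if n \<le> 277 then 2123 else 2113) else 2104) else (if n \<le> 281 then (if n \<le> 280 then 2094 else 2084) else 2074)) else (if n \<le> 285 then (if n \<le> 284 then (if n \<le> 283 then 2064 else 2054) else 2044) else (if n \<le> 287 then (if n \<le> 286 then 2034 else 2024) else 2014))))"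

definition fE_b12 :: "nat \<Rightarrow> int" where "fE_b12 n = (if n \<le> 300 then (if n \<le> 294 then (if n \<le> 291 then (if n \<le> 290 then (if n \<le> 289 then 2004 else 1994) else 1983) else (if n \<le> 293 then (if n \<le> 292 then 1973 else 1963) else 1952)) else (if n \<le> 297 then (if n \<le> 296 then (if n \<le> 295 then 1942 else 1931) else 1921) else (if n \<le> 299 then (if n \<le> 298 then 1910 else 1899) else 1889))) else (if n \<le> 306 then (if n \<le> 303 then (if n \<le> 302 then (if n \<le> 301 then 1878 else 1867) else 1856) else (if n \<le> 305 then (if n \<le> 304 then 1845 else 1834) else 1823)) else (if n \<le> 309 then (if n \<le> 308 then (if n \<le> 307 then 1812 else 1801) else 1790) else (if n \<le> 311 then (if n \<le> 310 then 1779 else 1768) else 1756))))"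

definition fE_b13 :: "nat \<Rightarrow> int" where "fE_b13 n = (if n \<le> 324 then (if n \<le> 318 then (if n \<le> 315 then (if n \<le> 314 then (if n \<le> 313 then 1745 else 1734) else 1722) else (if n \<le> 317 then (if n \<le> 316 then 1711 else 1699) else 1687)) else (if n \<le> 321 then (if n \<le> 320 then (if n \<le> 319 then 1676 else 1664) else 1652) else (if n \<le> 323 then (if n \<le> 322 then 1640 else 1628) else 1616))) else (if n \<le> 330 then (if n \<le> 327 then (if n \<le> 326 then (if n \<le> 325 then 1604 else 1592) else 1580) else (if n \<le> 329 then (if n \<le> 328 then 1568 else 1556) else 1544)) else (if n \<le> 333 then (if n \<le> 332 then (if n \<le> 331 then 1531 else 1519) else 1506) else (if n \<le> 335 then (if n \<le> 334 then 1494 else 1481) else 1469))))"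

definition fE_b14 :: "nat \<Rightarrow> int" where "fE_b14 n = (if n \<le> 348 then (if n \<le> 342 then (if n \<le> 339 then (if n \<le> 338 then (if n \<le> 337 then 1456 else 1443) else 1430) else (if n \<le> 341 then (if n \<le> 340 then 1417 else 1405) else 1392)) else (if n \<le> 345 then (if n \<le> 344 then (if n \<le> 343 then 1378 else 1365) else 1352) else (if n \<le> 347 then (if n \<le> 346 then 1339 else 1326) else 1312))) else (if n \<le> 354 then (if n \<le> 351 then (if n \<le> 350 then (if n \<le> 349 then 1299 else 1285) else 1272) else (if n \<le> 353 then (if n \<le> 352 then 1258 else 1244) else 1231)) else (if n \<le> 357 then (if n \<le> 356 then (if n \<le> 355 then 1217 else 1203) else 1189) else (if n \<le> 359 then (if n \<le> 358 then 1175 else 1161) else 1147))))"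

definition fE_b15 :: "nat \<Rightarrow> int" where "fE_b15 n = (if n \<le> 372 then (if n \<le> 366 then (if n \<le> 363 then (if n \<le> 362 then (if n \<le> 361 then 1132 else 1118) else 1104) else (if n \<le> 365 then (if n \<le> 364 then 1089 else 1075) else 1060)) else (if n \<le> 369 then (if n \<le> 368 then (if n \<le> 367 then 1045 else 1031) else 1016) else (if n \<le> 371 then (if n \<le> 370 then 1001 else 986) else 971))) else (if n \<le> 378 then (if n \<le> 375 then (if n \<le> 374 then (if n \<le> 373 then 956 else 941) else 926) else (if n \<le> 377 then (if n \<le> 376 then 910 else 895) else 879)) else (if n \<le> 381 then (if n \<le> 380 then (if n \<le> 379 then 864 else 848) else 832) else (if n \<le> 383 then (if n \<le> 382 then 817 else 801) else 785))))"

definition fE_b16 :: "nat \<Rightarrow> int" where "fE_b16 n = (if n \<le> 396 then (if n \<le> 390 then (if n \<le> 387 then (if n \<le> 386 then (if n \<le> 385 then 769 else 753) else 737) else (if n \<le> 389 then (if n \<le> 388 then 720 else 704) else 688)) else (if n \<le> 393 then (if n \<le> 392 then (if n \<le> 391 then 671 else 655) else 638) else (if n \<le> 395 then (if n \<le> 394 then 621 else 604) else 587))) else (if n \<le> 402 then (if n \<le> 399 then (if n \<le> 398 then (if n \<le> 397 then 570 else 553) else 536) else (if n \<le> 401 then (if n \<le> 400 then 519 else 502) else 484)) else (if n \<le> 405 then (if n \<le> 404 then (if n \<le> 403 then 467 else 449) else 431) else (if n \<le> 407 then (if n \<le> 406 then 413 else 396) else 378))))"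

definition fE_b17 :: "nat \<Rightarrow> int" where "fE_b17 n = (if n \<le> 420 then (if n \<le> 414 then (if n \<le> 411 then (if n \<le> 410 then (if n \<le> 409 then 359 else 341) else 323) else (if n \<le> 413 then (if n \<le> 412 then 305 else 286) else 268)) else (if n \<le> 417 then (if n \<le> 416 then (if n \<le> 415 then 249 else 230) else 212) else (if n \<le> 419 then (if n \<le> 418 then 193 else 174) else 154))) else (if n \<le> 426 then (if n \<le> 423 then (if n \<le> 422 then (if n \<le> 421 then 135 else 116) else 97) else (if n \<le> 425 then (if n \<le> 424 then 77 else 57) else 38)) else (if n \<le> 429 then (if n \<le> 428 then (if n \<le> 427 then 18 else 2) else 22) else (if n \<le> 431 then (if n \<le> 430 then 42 else 63) else 83))))"

definition fE_b18 :: "nat \<Rightarrow> int" where "fE_b18 n = (if n \<le> 444 then (if n \<le> 438 then (if n \<le> 435 then (if n \<le> 434 then (if n \<le> 433 then 103 else 124) else 145) else (if n \<le> 437 then (if n \<le> 436 then 165 else 186) else 207)) else (if n \<le> 441 then (if n \<le> 440 then (if n \<le> 439 then 228 else 250) else 271) else (if n \<le> 443 then (if n \<le> 442 then 292 else 314) else 336))) else (if n \<le> 450 then (if n \<le> 447 then (if n \<le> 446 then (if n \<le> 445 then 358 else 380) else 402) else (if n \<le> 449 then (if n \<le> 448 then 424 else 446) else 469)) else (if n \<le> 453 then (if n \<le> 452 then (if n \<le> 451 then 491 else 514) else 536) else (if n \<le> 455 then (if n \<le> 454 then 559 else 582) else 606))))"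

definition fE_b19 :: "nat \<Rightarrow> int" where "fE_b19 n = (if n \<le> 468 then (if n \<le> 462 then (if n \<le> 459 then (if n \<le> 458 then (if n \<le> 457 then 629 else 652) else 676) else (if n \<le> 461 then (if n \<le> 460 then 699 else 723) else 747)) else (if n \<le> 465 then (if n \<le> 464 then (if n \<le> 463 then 771 else 795) else 820) else (if n \<le> 467 then (if n \<le> 466 then 844 else 869) else 894))) else (if n \<le> 474 then (if n \<le> 471 then (if n \<le> 470 then (if n \<le> 469 then 918 else 943) else 969) else (if n \<le> 473 then (if n \<le> 472 then 994 else 1015) else 1035)) else (if n \<le> 477 then (if n \<le> 476 then (if n \<le> 475 then 1055 else 1075) else 1095) else (if n \<le> 479 then (if n \<le> 478 then 1115 else 1136) else 1156))))"

definition fE_b20 :: "nat \<Rightarrow> int" where "fE_b20 n = (if n \<le> 492 then (if n \<le> 486 then (if n \<le> 483 then (if n \<le> 482 then (if n \<le> 481 then 1177 else 1197) else 1218) else (if n \<le> 485 then (if n \<le> 484 then 1239 else 1260) else 1281)) else (if n \<le> 489 then (if n \<le> 488 then (if n \<le> 487 then 1302 else 1324) else 1345) else (if n \<le> 491 then (if n \<le> 490 then 1367 else 1388) else 1410))) else (if n \<le> 498 then (if n \<le> 495 then (if n \<le> 494 then (if n \<le> 493 then 1432 else 1454) else 1476) else (if n \<le> 497 then (if n \<le> 496 then 1499 else 1521) else 1544)) else (if n \<le> 501 then (if n \<le> 500 then (if n \<le> 499 then 1566 else 1589) else 1612) else (if n \<le> 503 then (if n \<le> 502 then 1635 else 1658)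 else 1681))))"

definition fE_b21 :: "nat \<Rightarrow> int" where "fE_b21 n = (if n \<le> 516 then (if n \<le> 510 then (if n \<le> 507 then (if n \<le> 506 then (if n \<le> 505 then 1705 else 1728) else 1752) else (if n \<le> 509 then (if n \<le> 508 then 1776 else 1800) else 1824)) else (if n \<le> 513 then (if n \<le> 512 then (if n \<le> 511 then 1848 else 1872) else 1897) else (if n \<le> 515 then (if n \<le> 514 then 1922 else 1946) else 1971))) else (if n \<le> 522 then (if n \<le> 519 then (if n \<le> 518 then (if n \<le> 517 then 1996 else 2022) else 2047) else (if n \<le> 521 then (if n \<le> 520 then 2072 else 2098) else 2124)) else (if n \<le> 525 then (if n \<le> 524 then (if n \<le> 523 then 2150 else 2176) else 2202) else (if n \<le> 527 then (if n \<le> 526 then 2229 else 2255) else 2282))))"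

definition fE_b22 :: "nat \<Rightarrow> int" where "fE_b22 n = (if n \<le> 540 then (if n \<le> 534 then (if n \<le> 531 then (if n \<le> 530 then (if n \<le> 529 then 2309 else 2336) else 2363) else (if n \<le> 533 then (if n \<le> 532 then 2391 else 2418) else 2446)) else (if n \<le> 537 then (if n \<le> 536 then (if n \<le> 535 then 2474 else 2502) else 2530) else (if n \<le> 539 then (if n \<le> 538 then 2559 else 2588) else 2616))) else (if n \<le> 546 then (if n \<le> 543 then (if n \<le> 542 then (if n \<le> 541 then 2645 else 2674) else 2704) else (if n \<le> 545 then (if n \<le> 544 then 2733 else 2763) else 2793)) else (if n \<le> 549 then (if n \<le> 548 then (if n \<le> 547 then 2823 else 2853) else 2884) else (if n \<le> 551 then (if n \<le> 550 then 2915 else 2946) else 2977))))"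

definition fE_b23 :: "nat \<Rightarrow> int" where "fE_b23 n = (if n \<le> 564 then (if n \<le> 558 then (if n \<le> 555 then (if n \<le> 554 then (if n \<le> 553 then 3008 else 3040) else 3071) else (if n \<le> 557 then (if n \<le> 556 then 3103 else 3135) else 3168)) else (if n \<le> 561 then (if n \<le> 560 then (if n \<le> 559 then 3200 else 3233) else 3266) else (if n \<le> 563 then (if n \<le> 562 then 3300 else 3333) else 3367))) else (if n \<le> 570 then (if n \<le> 567 then (if n \<le> 566 then (if n \<le> 565 then 3401 else 3435) else 3470) else (if n \<le> 569 then (if n \<le> 568 then 3504 else 3539) else 3574)) else (if n \<le> 573 then (if n \<le> 572 then (if n \<le> 571 then 3610 else 3645) else 3681) else (if n \<le> 575 then (if n \<le> 574 then 3718 else 3754) else 3791))))"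

definition fE_b24 :: "nat \<Rightarrow> int" where "fE_b24 n = (if n \<le> 588 then (if n \<le> 582 then (if n \<le> 579 then (if n \<le> 578 then (if n \<le> 577 then 3828 else 3865) else 3903) else (if n \<le> 581 then (if n \<le> 580 then 3941 else 3979) else 4017)) else (if n \<le> 585 then (if n \<le> 584 then (if n \<le> 583 then 4056 else 4095) else 4134) else (if n \<le> 587 then (if n \<le> 586 then 4174 else 4214) else 4254))) else (if n \<le> 594 then (if n \<le> 591 then (if n \<le> 590 then (if n \<le> 589 then 4294 else 4335) else 4376) else (if n \<le> 593 then (if n \<le> 592 then 4418 else 4460) else 4502)) else (if n \<le> 597 then (if n \<le> 596 then (if n \<le> 595 then 4544 else 4587) else 4630) else (if n \<le> 599 then (if n \<le> 598 then 4674 else 4718) else 4762))))"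

definition fE_b25 :: "nat \<Rightarrow> int" where "fE_b25 n = (if n \<le> 612 then (if n \<le> 606 then (if n \<le> 603 then (if n \<le> 602 then (if n \<le> 601 then 4806 else 4851) else 4897) else (if n \<le> 605 then (if n \<le> 604 then 4943 else 4989) else 5035)) else (if n \<le> 609 then (if n \<le> 608 then (if n \<le> 607 then 5082 else 5129) else 5177) else (if n \<le> 611 then (if n \<le> 610 then 5225 else 5274) else 5323))) else (if n \<le> 618 then (if n \<le> 615 then (if n \<le> 614 then (if n \<le> 613 then 5372 else 5422) else 5473) else (if n \<le> 617 then (if n \<le> 616 then 5524 else 5575) else 5627)) else (if n \<le> 621 then (if n \<le> 620 then (if n \<le> 619 then 5679 else 5731) else 5785) else (if n \<le> 623 then (if n \<le> 622 then 5838 else 5893) else 5947))))"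

definition fE_b26 :: "nat \<Rightarrow> int" where "fE_b26 n = (if n \<le> 636 then (if n \<le> 630 then (if n \<le> 627 then (if n \<le> 626 then (if n \<le> 625 then 6003 else 6058) else 6115) else (if n \<le> 629 then (if n \<le> 628 then 6172 else 6229) else 6287)) else (if n \<le> 633 then (if n \<le> 632 then (if n \<le> 631 then 6346 else 6405) else 6465) else (if n \<le> 635 then (if n \<le> 634 then 6525 else 6586) else 6648))) else (if n \<le> 642 then (if n \<le> 639 then (if n \<le> 638 then (if n \<le> 637 then 6710 else 6773) else 6837) else (if n \<le> 641 then (if n \<le> 640 then 6901 else 6967) else 7032)) else (if n \<le> 645 then (if n \<le> 644 then (if n \<le> 643 then 7099 else 7166) else 7234) else (if n \<le> 647 then (if n \<le> 646 then 7303 else 7372) else 7443))))"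

definition fE_b27 :: "nat \<Rightarrow> int" where "fE_b27 n = (if n \<le> 660 then (if n \<le> 654 then (if n \<le> 651 then (if n \<le> 650 then (if n \<le> 649 then 7514 else 7586) else 7659) else (if n \<le> 653 then (if n \<le> 652 then 7733 else 7807) else 7883)) else (if n \<le> 657 then (if n \<le> 656 then (if n \<le> 655 then 7959 else 8037) else 8115) else (if n \<le> 659 then (if n \<le> 658 then 8195 else 8275) else 8356))) else (if n \<le> 666 then (if n \<le> 663 then (if n \<le> 662 then (if n \<le> 661 then 8439 else 8522) else 8607) else (if n \<le> 665 then (if n \<le> 664 then 8693 else 8780) else 8868)) else (if n \<le> 669 then (if n \<le> 668 then (if n \<le> 667 then 8958 else 9048) else 9140) else (if n \<le> 671 then (if n \<le> 670 then 9234 else 9328) else 9424))))"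

definition fE_b28 :: "nat \<Rightarrow> int" where "fE_b28 n = (if n \<le> 684 then (if n \<le> 678 then (if n \<le> 675 then (if n \<le> 674 then (if n \<le> 673 then 9522 else 9621) else 9721) else (if n \<le> 677 then (if n \<le> 676 then 9823 else 9927) else 10032)) else (if n \<le> 681 then (if n \<le> 680 then (if n \<le> 679 then 10139 else 10247) else 10358) else (if n \<le> 683 then (if n \<le> 682 then 10470 else 10584) else 10701))) else (if n \<le> 690 then (if n \<le> 687 then (if n \<le> 686 then (if n \<le> 685 then 10819 else 10939) else 11000) else (if n \<le> 689 then (if n \<le> 688 then 11000 else 11000) else 11000)) else (if n \<le> 693 then (if n \<le> 692 then (if n \<le> 691 then 11000 else 11000) else 11000) else (if n \<le> 695 then (if n \<le> 694 then 11000 else 11000) else 11000))))"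

definition fE_b29 :: "nat \<Rightarrow> int" where "fE_b29 n = (if n \<le> 708 then (if n \<le> 702 then (if n \<le> 699 then (if n \<le> 698 then (if n \<le> 697 then 11000 else 11000) else 11000) else (if n \<le> 701 then (if n \<le> 700 then 11000 else 11000) else 11000)) else (if n \<le> 705 then (if n \<le> 704 then (if n \<le> 703 then 11000 else 11000) else 11000) else (if n \<le> 707 then (if n \<le> 706 then 11000 else 11000) else 11000))) else (if n \<le> 714 then (if n \<le> 711 then (if n \<le> 710 then (if n \<le> 709 then 11000 else 11000) else 11000) else (if n \<le> 713 then (if n \<le> 712 then 11000 else 11000) else 11000)) else (if n \<le> 717 then (if n \<le> 716 then (if n \<le> 715 then 11000 else 11000) else 11000) else (if n \<le> 719 then (if n \<le> 718 then 11000 else 11000) else 11000))))"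

definition fE_b30 :: "nat \<Rightarrow> int" where "fE_b30 n = (if n \<le> 732 then (if n \<le> 726 then (if n \<le> 723 then (if n \<le> 722 then (if n \<le> 721 then 11000 else 11000) else 11000) else (if n \<le> 725 then (if n \<le> 724 then 11000 else 11000) else 11000)) else (if n \<le> 729 then (if n \<le> 728 then (if n \<le> 727 then 11000 else 11000) else 11000) else (if n \<le> 731 then (if n \<le> 730 then 11000 else 11000) else 11000))) else (if n \<le> 738 then (if n \<le> 735 then (if n \<le> 734 then (if n \<le> 733 then 11000 else 11000) else 11000) else (if n \<le> 737 then (if n \<le> 736 then 11000 else 11000) else 11000)) else (if n \<le> 741 then (if n \<le> 740 then (if n \<le> 739 then 11000 else 11000) else 11000) else (if n \<le> 743 then (if n \<le> 742 then 11000 else 11000) else 11000))))"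

definition fE_b31 :: "nat \<Rightarrow> int" where "fE_b31 n = (if n \<le> 746 then (if n \<le> 745 then 11000 else 11000) else (if n \<le> 747 then 11000 else 11000))"

definition fE :: "nat \<Rightarrow> int" where "fE n = (if n \<le> 384 then (if n \<le> 192 then (if n \<le> 96 then (if n \<le> 48 then (if n \<le> 24 then fE_b0 n else fE_b1 n) else (if n \<le> 72 then fE_b2 n else fE_b3 n)) else (if n \<le> 144 then (if n \<le> 120 then fE_b4 n else fE_b5 n) else (if n \<le> 168 then fE_b6 n else fE_b7 n))) else (if n \<le> 288 then (if n \<le> 240 then (if n \<le> 216 then fE_b8 n else fE_b9 n) else (if n \<le> 264 then fE_b10 n else fE_b11 n)) else (if n \<le> 336 then (if n \<le> 312 then fE_b12 n else fE_b13 n) else (if n \<le> 360 then fE_b14 n else fE_b15 n)))) else (if n \<le> 576 then (if n \<le> 480 then (if n \<le> 432 then (if n \<le> 408 then fE_b16 n else fE_b17 n) else (if n \<le> 456 then fE_b18 n else fE_b19 n)) else (if n \<le> 528 then (if n \<le> 504 then fE_b20 n else fE_b21 n) else (if n \<le> 552 then fE_b22 n else fE_b23 n))) else (if n \<le> 672 then (if n \<le> 624 then (if n \<le> 600 then fE_b24 n else fE_b25 n) else (if n \<le> 648 then fE_b26 n else fE_b27 n)) else (if n \<le> 720 then (if n \<le> 696 then fE_b28 n else fE_b29 n) else (if n \<le> 744 then fE_b30 n else fE_b31 n)))))"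

lemmas fE_defs = fE_def fE_b0_def fE_b1_def fE_b2_def fE_b3_def fE_b4_def fE_b5_def fE_b6_def fE_b7_def fE_b8_def fE_b9_def fE_b10_def fE_b11_def fE_b12_def fE_b13_def fE_b14_def fE_b15_def fE_b16_def fE_b17_def fE_b18_def fE_b19_def fE_b20_def fE_b21_def fE_b22_def fE_b23_def fE_b24_def fE_b25_def fE_b26_def fE_b27_def fE_b28_def fE_b29_def fE_b30_def fE_b31_def

definition fp_b0 :: "nat \<Rightarrow> nat" where "fp_b0 n = (if n \<le> 12 then (if n \<le> 6 then (if n \<le> 3 then (if n \<le> 2 then (if n \<le> 1 then 629 else 630) else 630) else (if n \<le> 5 then (if n \<le> 4 then 630 else 630) else 630)) else (if n \<le> 9 then (if n \<le> 8 then (if n \<le> 7 then 630 else 630) else 630) else (if n \<le> 11 then (if n \<le> 10 then 630 else 630) else 630))) else (if n \<le> 18 then (if n \<le> 15 then (if n \<le> 14 then (if n \<le> 13 then 630 else 630) else 630) else (if n \<le> 17 then (if n \<le> 16 then 630 else 630) else 630)) else (if n \<le> 21 then (if n \<le> 20 then (if n \<le> 19 then 631 else 631) else 631) else (if n \<le> 23 then (if n \<le> 22 then 631 else 631) else 631))))"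

definition fp_b1 :: "nat \<Rightarrow> nat" where "fp_b1 n = (if n \<le> 36 then (if n \<le> 30 then (if n \<le> 27 then (if n \<le> 26 then (if n \<le> 25 then 631 else 631) else 631) else (if n \<le> 29 then (if n \<le> 28 then 631 else 631) else 631)) else (if n \<le> 33 then (if n \<le> 32 then (if n \<le> 31 then 631 else 631) else 631) else (if n \<le> 35 then (if n \<le> 34 then 631 else 631) else 632))) else (if n \<le> 42 then (if n \<le> 39 then (if n \<le> 38 then (if n \<le> 37 then 632 else 632) else 632) else (if n \<le> 41 then (if n \<le> 40 then 632 else 632) else 632)) else (if n \<le> 45 then (if n \<le> 44 then (if n \<le> 43 then 632 else 632) else 632) else (if n \<le> 47 then (if n \<le> 46 then 632 else 632) else 632))))"

definition fp_b2 :: "nat \<Rightarrow> nat" where "fp_b2 n = (if n \<le> 60 then (if n \<le> 54 then (if n \<le> 51 then (if n \<le> 50 then (if n \<le> 49 then 632 else 632) else 632) else (if n \<le> 53 then (if n \<le> 52 then 633 else 633) else 633)) else (if n \<le> 57 then (if n \<le> 56 then (if n \<le> 55 then 633 else 633) else 633) else (if n \<le> 59 then (if n \<le> 58 then 633 else 633) else 633))) else (if n \<le> 66 then (if n \<le> 63 then (if n \<le> 62 then (if n \<le> 61 then 633 else 633) else 633) else (if n \<le> 65 then (if n \<le> 64 then 633 else 633) else 633)) else (if n \<le> 69 then (if n \<le> 68 then (if n \<le> 67 then 634 else 634) else 634) else (if n \<le> 71 then (if n \<le> 70 then 634 else 634) else 634))))"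

definition fp_b3 :: "nat \<Rightarrow> nat" where "fp_b3 n = (if n \<le> 84 then (if n \<le> 78 then (if n \<le> 75 then (if n \<le> 74 then (if n \<le> 73 then 634 else 634) else 634) else (if n \<le> 77 then (if n \<le> 76 then 634 else 634) else 634)) else (if n \<le> 81 then (if n \<le> 80 then (if n \<le> 79 then 634 else 634) else 635) else (if n \<le> 83 then (if n \<le> 82 then 635 else 635) else 635))) else (if n \<le> 90 then (if n \<le> 87 then (if n \<le> 86 then (if n \<le> 85 then 635 else 635) else 635) else (if n \<le> 89 then (if n \<le> 88 then 635 else 635) else 635)) else (if n \<le> 93 then (if n \<le> 92 then (if n \<le> 91 then 635 else 635) else 635) else (if n \<le> 95 then (if n \<le> 94 then 635 else 636) else 636))))"

definition fp_b4 :: "nat \<Rightarrow> nat" where "fp_b4 n = (if n \<le> 108 then (if n \<le> 102 then (if n \<le> 99 then (if n \<le> 98 then (if n \<le> 97 then 636 else 636) else 636) else (if n \<le> 101 then (if n \<le> 100 then 636 else 636) else 636)) else (if n \<le> 105 then (if n \<le> 104 then (if n \<le> 103 then 636 else 636) else 636) else (if n \<le> 107 then (if n \<le> 106 then 636 else 636) else 637))) else (if n \<le> 114 then (if n \<le> 111 then (if n \<le> 110 then (if n \<le> 109 then 637 else 637) else 637) else (if n \<le> 113 then (if n \<le> 112 then 637 else 637) else 637)) else (if n \<le> 117 then (if n \<le> 116 then (if n \<le> 115 then 637 else 637) else 637) else (if n \<le> 119 then (if n \<le> 118 then 637 else 637) else 637))))"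

definition fp_b5 :: "nat \<Rightarrow> nat" where "fp_b5 n = (if n \<le> 132 then (if n \<le> 126 then (if n \<le> 123 then (if n \<le> 122 then (if n \<le> 121 then 638 else 638) else 638) else (if n \<le> 125 then (if n \<le> 124 then 638 else 638) else 638)) else (if n \<le> 129 then (if n \<le> 128 then (if n \<le> 127 then 638 else 638) else 638) else (if n \<le> 131 then (if n \<le> 130 then 638 else 638) else 638))) else (if n \<le> 138 then (if n \<le> 135 then (if n \<le> 134 then (if n \<le> 133 then 639 else 639) else 639) else (if n \<le> 137 then (if n \<le> 136 then 639 else 639) else 639)) else (if n \<le> 141 then (if n \<le> 140 then (if n \<le> 139 then 639 else 639) else 639) else (if n \<le> 143 then (if n \<le> 142 then 639 else 639) else 639))))"

definition fp_b6 :: "nat \<Rightarrow> nat" where "fp_b6 n = (if n \<le> 156 then (if n \<le> 150 then (if n \<le> 147 then (if n \<le> 146 then (if n \<le> 145 then 640 else 640) else 640) else (if n \<le> 149 then (if n \<le> 148 then 640 else 640) else 640)) else (if n \<le> 153 then (if n \<le> 152 then (if n \<le> 151 then 640 else 640) else 640) else (if n \<le> 155 then (if n \<le> 154 then 640 else 640) else 640))) else (if n \<le> 162 then (if n \<le> 159 then (if n \<le> 158 then (if n \<le> 157 then 641 else 641) else 641) else (if n \<le> 161 then (if n \<le> 160 then 641 else 641) else 641)) else (if n \<le> 165 then (if n \<le> 164 then (if n \<le> 163 then 641 else 641) else 641) else (if n \<le> 167 then (if n \<le> 166 then 641 else 641) else 642))))"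

definition fp_b7 :: "nat \<Rightarrow> nat" where "fp_b7 n = (if n \<le> 180 then (if n \<le> 174 then (if n \<le> 171 then (if n \<le> 170 then (if n \<le> 169 then 642 else 642) else 642) else (if n \<le> 173 then (if n \<le> 172 then 642 else 642) else 642)) else (if n \<le> 177 then (if n \<le> 176 then (if n \<le> 175 then 642 else 642) else 642) else (if n \<le> 179 then (if n \<le> 178 then 642 else 643) else 643))) else (if n \<le> 186 then (if n \<le> 183 then (if n \<le> 182 then (if n \<le> 181 then 643 else 643) else 643) else (if n \<le> 185 then (if n \<le> 184 then 643 else 643) else 643)) else (if n \<le> 189 then (if n \<le> 188 then (if n \<le> 187 then 643 else 643) else 644) else (if n \<le> 191 then (if n \<le> 190 then 644 else 644) else 644))))"

definition fp_b8 :: "nat \<Rightarrow> nat" where "fp_b8 n = (if n \<le> 204 then (if n \<le> 198 then (if n \<le> 195 then (if n \<le> 194 then (if n \<le> 193 then 644 else 644) else 644) else (if n \<le> 197 then (if n \<le> 196 then 644 else 644) else 644)) else (if n \<le> 201 then (if n \<le> 200 then (if n \<le> 199 then 645 else 645) else 645) else (if n \<le> 203 then (if n \<le> 202 then 645 else 645) else 645))) else (if n \<le> 210 then (if n \<le> 207 then (if n \<le> 206 then (if n \<le> 205 then 645 else 645) else 645) else (if n \<le> 209 then (if n \<le> 208 then 645 else 646) else 646)) else (if n \<le> 213 then (if n \<le> 212 then (if n \<le> 211 then 646 else 646) else 646) else (if n \<le> 215 then (if n \<le> 214 then 646 else 646) else 646))))"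

definition fp_b9 :: "nat \<Rightarrow> nat" where "fp_b9 n = (if n \<le> 228 then (if n \<le> 222 then (if n \<le> 219 then (if n \<le> 218 then (if n \<le> 217 then 646 else 647) else 647) else (if n \<le> 221 then (if n \<le> 220 then 647 else 647) else 647)) else (if n \<le> 225 then (if n \<le> 224 then (if n \<le> 223 then 647 else 647) else 647) else (if n \<le> 227 then (if n \<le> 226 then 647 else 648) else 648))) else (if n \<le> 234 then (if n \<le> 231 then (if n \<le> 230 then (if n \<le> 229 then 648 else 648) else 648) else (if n \<le> 233 then (if n \<le> 232 then 648 else 648) else 648)) else (if n \<le> 237 then (if n \<le> 236 then (if n \<le> 235 then 648 else 649) else 649) else (if n \<le> 239 then (if n \<le> 238 then 649 else 649) else 649))))"

definition fp_b10 :: "nat \<Rightarrow> nat" where "fp_b10 n = (if n \<le> 252 then (if n \<le> 246 then (if n \<le> 243 then (if n \<le> 242 then (if n \<le> 241 then 649 else 649) else 649) else (if n \<le> 245 then (if n \<le> 244 then 649 else 650) else 650)) else (if n \<le> 249 then (if n \<le> 248 then (if n \<le> 247 then 650 else 650) else 650) else (if n \<le> 251 then (if n \<le> 250 then 650 else 650) else 650))) else (if n \<le> 258 then (if n \<le> 255 then (if n \<le> 254 then (if n \<le> 253 then 650 else 651) else 651) else (if n \<le> 257 then (if n \<le> 256 then 651 else 651) else 651)) else (if n \<le> 261 then (if n \<le> 260 then (if n \<le> 259 then 651 else 651) else 651) else (if n \<le> 263 then (if n \<le> 262 then 652 else 652) else 652))))"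

definition fp_b11 :: "nat \<Rightarrow> nat" where "fp_b11 n = (if n \<le> 276 then (if n \<le> 270 then (if n \<le> 267 then (if n \<le> 266 then (if n \<le> 265 then 652 else 652) else 652) else (if n \<le> 269 then (if n \<le> 268 then 652 else 652) else 653)) else (if n \<le> 273 then (if n \<le> 272 then (if n \<le> 271 then 653 else 653) else 653) else (if n \<le> 275 then (if n \<le> 274 then 653 else 653) else 653))) else (if n \<le> 282 then (if n \<le> 279 then (if n \<le> 278 then (if n \<le> 277 then 653 else 654) else 654) else (if n \<le> 281 then (if n \<le> 280 then 654 else 654) else 654)) else (if n \<le> 285 then (if n \<le> 284 then (if n \<le> 283 then 654 else 654) else 654) else (if n \<le> 287 then (if n \<le> 286 then 655 else 655) else 655))))"

definition fp_b12 :: "nat \<Rightarrow> nat" where "fp_b12 n = (if n \<le> 300 then (if n \<le> 294 then (if n \<le> 291 then (if n \<le> 290 then (if n \<le> 289 then 655 else 655) else 655) else (if n \<le> 293 then (if n \<le> 292 then 655 else 656) else 656)) else (if n \<le> 297 then (if n \<le> 296 then (if n \<le> 295 then 656 else 656) else 656) else (if n \<le> 299 then (if n \<le> 298 then 656 else 656) else 656))) else (if n \<le> 306 then (if n \<le> 303 then (if n \<le> 302 then (if n \<le> 301 then 657 else 657) else 657) else (if n \<le> 305 then (if n \<le> 304 then 657 else 657) else 657)) else (if n \<le> 309 then (if n \<le> 308 then (if n \<le> 307 then 657 else 658) else 658) else (if n \<le> 311 then (if n \<le> 310 then 658 else 658) else 658))))"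

definition fp_b13 :: "nat \<Rightarrow> nat" where "fp_b13 n = (if n \<le> 324 then (if n \<le> 318 then (if n \<le> 315 then (if n \<le> 314 then (if n \<le> 313 then 658 else 658) else 659) else (if n \<le> 317 then (if n \<le> 316 then 659 else 659) else 659)) else (if n \<le> 321 then (if n \<le> 320 then (if n \<le> 319 then 659 else 659) else 659) else (if n \<le> 323 then (if n \<le> 322 then 660 else 660) else 660))) else (if n \<le> 330 then (if n \<le> 327 then (if n \<le> 326 then (if n \<le> 325 then 660 else 660) else 660) else (if n \<le> 329 then (if n \<le> 328 then 660 else 661) else 661)) else (if n \<le> 333 then (if n \<le> 332 then (if n \<le> 331 then 661 else 661) else 661) else (if n \<le> 335 then (if n \<le> 334 then 661 else 661) else 662))))"

definition fp_b14 :: "nat \<Rightarrow> nat" where "fp_b14 n = (if n \<le> 348 then (if n \<le> 342 then (if n \<le> 339 then (if n \<le> 338 then (if n \<le> 337 then 662 else 662) else 662) else (if n \<le> 341 then (if n \<le> 340 then 662 else 662) else 663)) else (if n \<le> 345 then (if n \<le> 344 then (if n \<le> 343 then 663 else 663) else 663) else (if n \<le> 347 then (if n \<le> 346 then 663 else 663) else 663))) else (if n \<le> 354 then (if n \<le> 351 then (if n \<le> 350 then (if n \<le> 349 then 664 else 664) else 664) else (if n \<le> 353 then (if n \<le> 352 then 664 else 664) else 664)) else (if n \<le> 357 then (if n \<le> 356 then (if n \<le> 355 then 665 else 665) else 665) else (if n \<le> 359 then (if n \<le> 358 then 665 else 665) else 665))))"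

definition fp_b15 :: "nat \<Rightarrow> nat" where "fp_b15 n = (if n \<le> 372 then (if n \<le> 366 then (if n \<le> 363 then (if n \<le> 362 then (if n \<le> 361 then 666 else 666) else 666) else (if n \<le> 365 then (if n \<le> 364 then 666 else 666) else 666)) else (if n \<le> 369 then (if n \<le> 368 then (if n \<le> 367 then 666 else 667) else 667) else (if n \<le> 371 then (if n \<le> 370 then 667 else 667) else 667))) else (if n \<le> 378 then (if n \<le> 375 then (if n \<le> 374 then (if n \<le> 373 then 667 else 668) else 668) else (if n \<le> 377 then (if n \<le> 376 then 668 else 668) else 668)) else (if n \<le> 381 then (if n \<le> 380 then (if n \<le> 379 then 668 else 669) else 669) else (if n \<le> 383 then (if n \<le> 382 then 669 else 669) else 669))))"

definition fp_b16 :: "nat \<Rightarrow> nat" where "fp_b16 n = (if n \<le> 396 then (if n \<le> 390 then (if n \<le> 387 then (if n \<le> 386 then (if n \<le> 385 then 669 else 670) else 670) else (if n \<le> 389 then (if n \<le> 388 then 670 else 670) else 670)) else (if n \<le> 393 then (if n \<le> 392 then (if n \<le> 391 then 671 else 671) else 671) else (if n \<le> 395 then (if n \<le> 394 then 671 else 671) else 671))) else (if n \<le> 402 then (if n \<le> 399 then (if n \<le> 398 then (if n \<le> 397 then 672 else 672) else 672) else (if n \<le> 401 then (if n \<le> 400 then 672 else 672) else 672)) else (if n \<le> 405 then (if n \<le> 404 then (if n \<le> 403 then 673 else 673) else 673) else (if n \<le> 407 then (if n \<le> 406 then 673 else 673) else 674))))"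

definition fp_b17 :: "nat \<Rightarrow> nat" where "fp_b17 n = (if n \<le> 420 then (if n \<le> 414 then (if n \<le> 411 then (if n \<le> 410 then (if n \<le> 409 then 674 else 674) else 674) else (if n \<le> 413 then (if n \<le> 412 then 674 else 674) else 675)) else (if n \<le> 417 then (if n \<le> 416 then (if n \<le> 415 then 675 else 675) else 675) else (if n \<le> 419 then (if n \<le> 418 then 675 else 676) else 676))) else (if n \<le> 426 then (if n \<le> 423 then (if n \<le> 422 then (if n \<le> 421 then 676 else 676) else 676) else (if n \<le> 425 then (if n \<le> 424 then 676 else 677) else 677)) else (if n \<le> 429 then (if n \<le> 428 then (if n \<le> 427 then 677 else 677) else 677) else (if n \<le> 431 then (if n \<le> 430 then 678 else 678) else 678))))"

definition fp_b18 :: "nat \<Rightarrow> nat" where "fp_b18 n = (if n \<le> 444 then (if n \<le> 438 then (if n \<le> 435 then (if n \<le> 434 then (if n \<le> 433 then 678 else 678) else 679) else (if n \<le> 437 then (if n \<le> 436 then 679 else 679) else 679)) else (if n \<le> 441 then (if n \<le> 440 then (if n \<le> 439 then 679 else 680) else 680) else (if n \<le> 443 then (if n \<le> 442 then 680 else 680) else 680))) else (if n \<le> 450 then (if n \<le> 447 then (if n \<le> 446 then (if n \<le> 445 then 681 else 681) else 681) else (if n \<le> 449 then (if n \<le> 448 then 681 else 681) else 681)) else (if n \<le> 453 then (if n \<le> 452 then (if n \<le> 451 then 682 else 682) else 682) else (if n \<le> 455 then (if n \<le> 454 then 682 else 682) else 683))))"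

definition fp_b19 :: "nat \<Rightarrow> nat" where "fp_b19 n = (if n \<le> 468 then (if n \<le> 462 then (if n \<le> 459 then (if n \<le> 458 then (if n \<le> 457 then 683 else 683) else 683) else (if n \<le> 461 then (if n \<le> 460 then 683 else 684) else 684)) else (if n \<le> 465 then (if n \<le> 464 then (if n \<le> 463 then 684 else 684) else 685) else (if n \<le> 467 then (if n \<le> 466 then 685 else 685) else 685))) else (if n \<le> 474 then (if n \<le> 471 then (if n \<le> 470 then (if n \<le> 469 then 685 else 686) else 686) else (if n \<le> 473 then (if n \<le> 472 then 686 else 748) else 748)) else (if n \<le> 477 then (if n \<le> 476 then (if n \<le> 475 then 748 else 748) else 748) else (if n \<le> 479 then (if n \<le> 478 then 748 else 748) else 748))))"

definition fp_b20 :: "nat \<Rightarrow> nat" where "fp_b20 n = (if n \<le> 492 then (if n \<le> 486 then (if n \<le> 483 then (if n \<le> 482 then (if n \<le> 481 then 748 else 748) else 748) else (if n \<le> 485 then (if n \<le> 484 then 748 else 748) else 748)) else (if n \<le> 489 then (if n \<le> 488 then (if n \<le> 487 then 748 else 748) else 748) else (if n \<le> 491 then (if n \<le> 490 then 748 else 748) else 748))) else (if n \<le> 498 then (if n \<le> 495 then (if n \<le> 494 then (if n \<le> 493 then 748 else 748) else 748) else (if n \<le> 497 then (if n \<le> 496 then 748 else 748) else 748)) else (if n \<le> 501 then (if n \<le> 500 then (if n \<le> 499 then 748 else 748) else 748) else (if n \<le> 503 then (if n \<le> 502 then 748 else 748) else 748))))"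

definition fp_b21 :: "nat \<Rightarrow> nat" where "fp_b21 n = (if n \<le> 516 then (if n \<le> 510 then (if n \<le> 507 then (if n \<le> 506 then (if n \<le> 505 then 748 else 748) else 748) else (if n \<le> 509 then (if n \<le> 508 then 748 else 748) else 748)) else (if n \<le> 513 then (if n \<le> 512 then (if n \<le> 511 then 748 else 748) else 748) else (if n \<le> 515 then (if n \<le> 514 then 748 else 748) else 748))) else (if n \<le> 522 then (if n \<le> 519 then (if n \<le> 518 then (if n \<le> 517 then 748 else 748) else 748) else (if n \<le> 521 then (if n \<le> 520 then 748 else 748) else 748)) else (if n \<le> 525 then (if n \<le> 524 then (if n \<le> 523 then 748 else 748) else 748) else (if n \<le> 527 then (if n \<le> 526 then 748 else 748) else 748))))"

definition fp_b22 :: "nat \<Rightarrow> nat" where "fp_b22 n = (if n \<le> 540 then (if n \<le> 534 then (if n \<le> 531 then (if n \<le> 530 then (if n \<le> 529 then 748 else 748) else 748) else (if n \<le> 533 then (if n \<le> 532 then 748 else 748) else 748)) else (if n \<le> 537 then (if n \<le> 536 then (if n \<le> 535 then 748 else 748) else 748) else (if n \<le> 539 then (if n \<le> 538 then 748 else 748) else 748))) else (if n \<le> 546 then (if n \<le> 543 then (if n \<le> 542 then (if n \<le> 541 then 748 else 748) else 748) else (if n \<le> 545 then (if n \<le> 544 then 748 else 748) else 748)) else (if n \<le> 549 then (if n \<le> 548 then (if n \<le> 547 then 748 else 748) else 748) else (if n \<le> 551 then (if n \<le> 550 then 748 else 748) else 748))))"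

definition fp_b23 :: "nat \<Rightarrow> nat" where "fp_b23 n = (if n \<le> 564 then (if n \<le> 558 then (if n \<le> 555 then (if n \<le> 554 then (if n \<le> 553 then 748 else 748) else 748) else (if n \<le> 557 then (if n \<le> 556 then 748 else 748) else 748)) else (if n \<le> 561 then (if n \<le> 560 then (if n \<le> 559 then 748 else 748) else 748) else (if n \<le> 563 then (if n \<le> 562 then 748 else 748) else 748))) else (if n \<le> 570 then (if n \<le> 567 then (if n \<le> 566 then (if n \<le> 565 then 748 else 748) else 748) else (if n \<le> 569 then (if n \<le> 568 then 748 else 748) else 748)) else (if n \<le> 573 then (if n \<le> 572 then (if n \<le> 571 then 748 else 748) else 748) else (if n \<le> 575 then (if n \<le> 574 then 748 else 748) else 748))))"

definition fp_b24 :: "nat \<Rightarrow> nat" where "fp_b24 n = (if n \<le> 588 then (if n \<le> 582 then (if n \<le> 579 then (if n \<le> 578 then (if n \<le> 577 then 748 else 748) else 748) else (if n \<le> 581 then (if n \<le> 580 then 748 else 748) else 748)) else (if n \<le> 585 then (if n \<le> 584 then (if n \<le> 583 then 748 else 748) else 748) else (if n \<le> 587 then (if n \<le> 586 then 748 else 748) else 748))) else (if n \<le> 594 then (if n \<le> 591 then (if n \<le> 590 then (if n \<le> 589 then 748 else 748) else 748) else (if n \<le> 593 then (if n \<le> 592 then 748 else 748) else 748)) else (if n \<le> 597 then (if n \<le> 596 then (if n \<le> 595 then 748 else 748) else 748) else (if n \<le> 599 then (if n \<le> 598 then 748 else 748) else 748))))"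

definition fp_b25 :: "nat \<Rightarrow> nat" where "fp_b25 n = (if n \<le> 612 then (if n \<le> 606 then (if n \<le> 603 then (if n \<le> 602 then (if n \<le> 601 then 748 else 748) else 748) else (if n \<le> 605 then (if n \<le> 604 then 748 else 748) else 748)) else (if n \<le> 609 then (if n \<le> 608 then (if n \<le> 607 then 748 else 748) else 748) else (if n \<le> 611 then (if n \<le> 610 then 748 else 748) else 748))) else (if n \<le> 618 then (if n \<le> 615 then (if n \<le> 614 then (if n \<le> 613 then 748 else 748) else 748) else (if n \<le> 617 then (if n \<le> 616 then 748 else 748) else 748)) else (if n \<le> 621 then (if n \<le> 620 then (if n \<le> 619 then 748 else 748) else 748) else (if n \<le> 623 then (if n \<le> 622 then 748 else 748) else 748))))"

definition fp_b26 :: "nat \<Rightarrow> nat" where "fp_b26 n = (if n \<le> 636 then (if n \<le> 630 then (if n \<le> 627 then (if n \<le> 626 then (if n \<le> 625 then 748 else 748) else 748) else (if n \<le> 629 then (if n \<le> 628 then 748 else 748) else 748)) else (if n \<le> 633 then (if n \<le> 632 then (if n \<le> 631 then 748 else 748) else 748) else (if n \<le> 635 then (if n \<le> 634 then 748 else 748) else 748))) else (if n \<le> 642 then (if n \<le> 639 then (if n \<le> 638 then (if n \<le> 637 then 748 else 748) else 748) else (if n \<le> 641 then (if n \<le> 640 then 748 else 748) else 748)) else (if n \<le> 645 then (if n \<le> 644 then (if n \<le> 643 then 748 else 748) else 748) else (if n \<le> 647 then (if n \<le> 646 then 748 else 748) else 748))))"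

definition fp_b27 :: "nat \<Rightarrow> nat" where "fp_b27 n = (if n \<le> 660 then (if n \<le> 654 then (if n \<le> 651 then (if n \<le> 650 then (if n \<le> 649 then 748 else 748) else 748) else (if n \<le> 653 then (if n \<le> 652 then 748 else 748) else 748)) else (if n \<le> 657 then (if n \<le> 656 then (if n \<le> 655 then 748 else 748) else 748) else (if n \<le> 659 then (if n \<le> 658 then 748 else 748) else 748))) else (if n \<le> 666 then (if n \<le> 663 then (if n \<le> 662 then (if n \<le> 661 then 748 else 748) else 748) else (if n \<le> 665 then (if n \<le> 664 then 748 else 748) else 748)) else (if n \<le> 669 then (if n \<le> 668 then (if n \<le> 667 then 748 else 748) else 748) else (if n \<le> 671 then (if n \<le> 670 then 748 else 748) else 748))))"

definition fp_b28 :: "nat \<Rightarrow> nat" where "fp_b28 n = (if n \<le> 684 then (if n \<le> 678 then (if n \<le> 675 then (if n \<le> 674 then (if n \<le> 673 then 748 else 748) else 748) else (if n \<le> 677 then (if n \<le> 676 then 748 else 748) else 748)) else (if n \<le> 681 then (if n \<le> 680 then (if n \<le> 679 then 748 else 748) else 748) else (if n \<le> 683 then (if n \<le> 682 then 748 else 748) else 748))) else (if n \<le> 690 then (if n \<le> 687 then (if n \<le> 686 then (if n \<le> 685 then 748 else 748) else 748) else (if n \<le> 689 then (if n \<le> 688 then 748 else 748) else 748)) else (if n \<le> 693 then (if n \<le> 692 then (if n \<le> 691 then 748 else 748) else 748) else (if n \<le> 695 then (if n \<le> 694 then 748 else 748) else 748))))"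

definition fp_b29 :: "nat \<Rightarrow> nat" where "fp_b29 n = (if n \<le> 708 then (if n \<le> 702 then (if n \<le> 699 then (if n \<le> 698 then (if n \<le> 697 then 748 else 748) else 748) else (if n \<le> 701 then (if n \<le> 700 then 748 else 748) else 748)) else (if n \<le> 705 then (if n \<le> 704 then (if n \<le> 703 then 748 else 748) else 748) else (if n \<le> 707 then (if n \<le> 706 then 748 else 748) else 748))) else (if n \<le> 714 then (if n \<le> 711 then (if n \<le> 710 then (if n \<le> 709 then 748 else 748) else 748) else (if n \<le> 713 then (if n \<le> 712 then 748 else 748) else 748)) else (if n \<le> 717 then (if n \<le> 716 then (if n \<le> 715 then 748 else 748) else 748) else (if n \<le> 719 then (if n \<le> 718 then 748 else 748) else 748))))"

definition fp_b30 :: "nat \<Rightarrow> nat" where "fp_b30 n = (if n \<le> 732 then (if n \<le> 726 then (if n \<le> 723 then (if n \<le> 722 then (if n \<le> 721 then 748 else 748) else 748) else (if n \<le> 725 then (if n \<le> 724 then 748 else 748) else 748)) else (if n \<le> 729 then (if n \<le> 728 then (if n \<le> 727 then 748 else 748) else 748) else (if n \<le> 731 then (if n \<le> 730 then 748 else 748) else 748))) else (if n \<le> 738 then (if n \<le> 735 then (if n \<le> 734 then (if n \<le> 733 then 748 else 748) else 748) else (if n \<le> 737 then (if n \<le> 736 then 748 else 748) else 748)) else (if n \<le> 741 then (if n \<le> 740 then (if n \<le> 739 then 748 else 748) else 748) else (if n \<le> 743 then (if n \<le> 742 then 748 else 748) else 748))))"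

definition fp_b31 :: "nat \<Rightarrow> nat" where "fp_b31 n = (if n \<le> 746 then (if n \<le> 745 then 748 else 748) else (if n \<le> 747 then 748 else 748))"

definition fp :: "nat \<Rightarrow> nat" where "fp n = (if n \<le> 384 then (if n \<le> 192 then (if n \<le> 96 then (if n \<le> 48 then (if n \<le> 24 then fp_b0 n else fp_b1 n) else (if n \<le> 72 then fp_b2 n else fp_b3 n)) else (if n \<le> 144 then (if n \<le> 120 then fp_b4 n else fp_b5 n) else (if n \<le> 168 then fp_b6 n else fp_b7 n))) else (if n \<le> 288 then (if n \<le> 240 then (if n \<le> 216 then fp_b8 n else fp_b9 n) else (if n \<le> 264 then fp_b10 n else fp_b11 n)) else (if n \<le> 336 then (if n \<le> 312 then fp_b12 n else fp_b13 n) else (if n \<le> 360 then fp_b14 n else fp_b15 n)))) else (if n \<le> 576 then (if n \<le> 480 then (if n \<le> 432 then (if n \<le> 408 then fp_b16 n else fp_b17 n) else (if n \<le> 456 then fp_b18 n else fp_b19 n)) else (if n \<le> 528 then (if n \<le> 504 then fp_b20 n else fp_b21 n) else (if n \<le> 552 then fp_b22 n else fp_b23 n))) else (if n \<le> 672 then (if n \<le> 624 then (if n \<le> 600 then fp_b24 n else fp_b25 n) else (if n \<le> 648 then fp_b26 n else fp_b27 n)) else (if n \<le> 720 then (if n \<le> 696 then fp_b28 n else fp_b29 n) else (if n \<le> 744 then fp_b30 n else fp_b31 n)))))"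

lemmas fp_defs = fp_def fp_b0_def fp_b1_def fp_b2_def fp_b3_def fp_b4_def fp_b5_def fp_b6_def fp_b7_def fp_b8_def fp_b9_def fp_b10_def fp_b11_def fp_b12_def fp_b13_def fp_b14_def fp_b15_def fp_b16_def fp_b17_def fp_b18_def fp_b19_def fp_b20_def fp_b21_def fp_b22_def fp_b23_def fp_b24_def fp_b25_def fp_b26_def fp_b27_def fp_b28_def fp_b29_def fp_b30_def fp_b31_def

definition fP_b0 :: "nat \<Rightarrow> int" where "fP_b0 n = (if n \<le> 11 then (if n \<le> 5 then (if n \<le> 2 then (if n \<le> 1 then (if n \<le> 0 then 0 else 13793796) else 27565317) else (if n \<le> 4 then (if n \<le> 3 then 41314581 else 55034197) else 68731598)) else (if n \<le> 8 then (if n \<le> 7 then (if n \<le> 6 then 82406802 else 96052438) else 109675919) else (if n \<le> 10 then (if n \<le> 9 then 123277263 else 136849119) else 150398880))) else (if n \<le> 17 then (if n \<le> 14 then (if n \<le> 13 then (if n \<le> 12 then 163926564 else 177424840) else 190901081) else (if n \<le> 16 then (if n \<le> 15 then 204347970 else 217772866) else 231175787)) else (if n \<le> 20 then (if n \<le> 19 then (if n \<le> 18 then 244549436 else 257901152) else 271223652) else (if n \<le> 22 then (if n \<le> 21 then 284524261 else 297795710) else 311045310))))"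

definition fP_b1 :: "nat \<Rightarrow> int" where "fP_b1 n = (if n \<le> 35 then (if n \<le> 29 then (if n \<le> 26 then (if n \<le> 25 then (if n \<le> 24 then 324265806 else 337464495) else 350634136) else (if n \<le> 28 then (if n \<le> 27 then 363782012 else 376900896) else 389998057)) else (if n \<le> 32 then (if n \<le> 31 then (if n \<le> 30 then 403066282 else 416105603) else 429123267) else (if n \<le> 34 then (if n \<le> 33 then 442112083 else 455072083) else 468010492))) else (if n \<le> 41 then (if n \<le> 38 then (if n \<le> 37 then (if n \<le> 36 then 480920141 else 493801062) else 506660458) else (if n \<le> 40 then (if n \<le> 39 then 519491182 else 532293266) else 545073891)) else (if n \<le> 44 then (if n \<le> 43 then (if n \<le> 42 then 557825932 else 570549421) else 583244390) else (if n \<le> 46 then (if n \<le> 45 then 595910871 else 608556007) else 621172711))))"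

definition fP_b2 :: "nat \<Rightarrow> int" where "fP_b2 n = (if n \<le> 59 then (if n \<le> 53 then (if n \<le> 50 then (if n \<le> 49 then (if n \<le> 48 then 633761015 else 646320951) else 658852551) else (if n \<le> 52 then (if n \<le> 51 then 671355847 else 683830871) else 696284712)) else (if n \<le> 56 then (if n \<le> 55 then (if n \<le> 54 then 708710337 else 721107778) else 733477067) else (if n \<le> 58 then (if n \<le> 57 then 745818236 else 758131317) else 770416342))) else (if n \<le> 65 then (if n \<le> 62 then (if n \<le> 61 then (if n \<le> 60 then 782673343 else 794902352) else 807103401) else (if n \<le> 64 then (if n \<le> 63 then 819276522 else 831421747) else 843539108)) else (if n \<le> 68 then (if n \<le> 67 then (if n \<le> 66 then 855621684 else 867676468) else 879703492) else (if n \<le> 70 then (if n \<le> 69 then 891702788 else 903674388) else 915618324))))"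

definition fP_b3 :: "nat \<Rightarrow> int" where "fP_b3 n = (if n \<le> 83 then (if n \<le> 77 then (if n \<le> 74 then (if n \<le> 73 then (if n \<le> 72 then 927534628 else 939416437) else 951270686) else (if n \<le> 76 then (if n \<le> 75 then 963097407 else 974896632) else 986661532)) else (if n \<le> 80 then (if n \<le> 79 then (if n \<le> 78 then 998399008 else 1010109092) else 1021784981) else (if n \<le> 82 then (if n \<le> 81 then 1033433550 else 1045054831) else 1056642047))) else (if n \<le> 89 then (if n \<le> 86 then (if n \<le> 85 then (if n \<le> 84 then 1068202047 else 1079734863) else 1091233744) else (if n \<le> 88 then (if n \<le> 87 then 1102705513 else 1114143437) else 1125554321)) else (if n \<le> 92 then (if n \<le> 91 then (if n \<le> 90 then 1136931450 else 1148281611) else 1159598107) else (if n \<le> 94 then (if n \<le> 93 then 1170887707 else 1182143732) else 1193372933))))"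

definition fP_b4 :: "nat \<Rightarrow> int" where "fP_b4 n = (if n \<le> 107 then (if n \<le> 101 then (if n \<le> 98 then (if n \<le> 97 then (if n \<le> 96 then 1204568649 else 1215730930) else 1226866499) else (if n \<le> 100 then (if n \<le> 99 then 1237968723 else 1249044307) else 1260086636)) else (if n \<le> 104 then (if n \<le> 103 then (if n \<le> 102 then 1271095760 else 1282071729) else 1293021210) else (if n \<le> 106 then (if n \<le> 105 then 1303937626 else 1314821027) else 1325671463))) else (if n \<le> 113 then (if n \<le> 110 then (if n \<le> 109 then (if n \<le> 108 then 1336495563 else 1347286788) else 1358045188) else (if n \<le> 112 then (if n \<le> 111 then 1368770813 else 1379463713) else 1390123938)) else (if n \<le> 116 then (if n \<le> 115 then (if n \<le> 114 then 1400751538 else 1411346563) else 1421915564) else (if n \<le> 118 then (if n \<le> 117 then 1432452080 else 1442956161) else 1453427857))))"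

definition fP_b5 :: "nat \<Rightarrow> int" where "fP_b5 n = (if n \<le> 131 then (if n \<le> 125 then (if n \<le> 122 then (if n \<le> 121 then (if n \<le> 120 then 1463867218 else 1474267843) else 1484636243) else (if n \<le> 124 then (if n \<le> 123 then 1494972468 else 1505276568) else 1515548593)) else (if n \<le> 128 then (if n \<le> 127 then (if n \<le> 126 then 1525788593 else 1535996618) else 1546172718) else (if n \<le> 130 then (if n \<le> 129 then 1556310574 else 1566416615) else 1576490891))) else (if n \<le> 137 then (if n \<le> 134 then (if n \<le> 133 then (if n \<le> 132 then 1586533452 else 1596538021) else 1606510985) else (if n \<le> 136 then (if n \<le> 135 then 1616452394 else 1626356003) else 1636228167)) else (if n \<le> 140 then (if n \<le> 139 then (if n \<le> 138 then 1646068936 else 1655872097) else 1665643973) else (if n \<le> 142 then (if n \<le> 141 then 1675378373 else 1685081598) else 1694747479))))"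

definition fP_b6 :: "nat \<Rightarrow> int" where "fP_b6 n = (if n \<le> 155 then (if n \<le> 149 then (if n \<le> 146 then (if n \<le> 145 then (if n \<le> 144 then 1704382295 else 1713979899) else 1723546548) else (if n \<le> 148 then (if n \<le> 147 then 1733076117 else 1742568678) else 1752030454)) else (if n \<le> 152 then (if n \<le> 151 then (if n \<le> 150 then 1761455354 else 1770843450) else 1780200931) else (if n \<le> 154 then (if n \<le> 153 then 1789521740 else 1798805949) else 1808053630))) else (if n \<le> 161 then (if n \<le> 158 then (if n \<le> 157 then (if n \<le> 156 then 1817270926 else 1826451826) else 1835596402) else (if n \<le> 160 then (if n \<le> 159 then 1844704726 else 1853776870) else 1862812906)) else (if n \<le> 164 then (if n \<le> 163 then (if n \<le> 162 then 1871812906 else 1880776942) else 1889705086) else (if n \<le> 166 then (if n \<le> 165 then 1898597410 else 1907453986) else 1916274886))))"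

definition fP_b7 :: "nat \<Rightarrow> int" where "fP_b7 n = (if n \<le> 179 then (if n \<le> 173 then (if n \<le> 170 then (if n \<le> 169 then (if n \<le> 168 then 1925060182 else 1933809946) else 1942524250) else (if n \<le> 172 then (if n \<le> 171 then 1951203166 else 1959846766) else 1968455122)) else (if n \<le> 176 then (if n \<le> 175 then (if n \<le> 174 then 1977022451 else 1985554692) else 1994051917) else (if n \<le> 178 then (if n \<le> 177 then 2002508381 else 2010929985) else 2019316801))) else (if n \<le> 185 then (if n \<le> 182 then (if n \<le> 181 then (if n \<le> 180 then 2027663122 else 2035974811) else 2044251940) else (if n \<le> 184 then (if n \<le> 183 then 2052488840 else 2060691336) else 2068853785)) else (if n \<le> 188 then (if n \<le> 187 then (if n \<le> 186 then 2076976285 else 2085064621) else 2093113190) else (if n \<le> 190 then (if n \<le> 189 then 2101127751 else 2109102727) else 2117038216))))"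

definition fP_b8 :: "nat \<Rightarrow> int" where "fP_b8 n = (if n \<le> 203 then (if n \<le> 197 then (if n \<le> 194 then (if n \<le> 193 then (if n \<le> 192 then 2124939937 else 2132802353) else 2140625562) else (if n \<le> 196 then (if n \<le> 195 then 2148409662 else 2156160318) else 2163872047)) else (if n \<le> 200 then (if n \<le> 199 then (if n \<le> 198 then 2171544947 else 2179179116) else 2186774652) else (if n \<le> 202 then (if n \<le> 201 then 2194331653 else 2201850217) else 2209330442))) else (if n \<le> 209 then (if n \<le> 206 then (if n \<le> 205 then (if n \<le> 204 then 2216772426 else 2224176267) else 2231542063) else (if n \<le> 208 then (if n \<le> 207 then 2238869912 else 2246154513) else 2253401377)) else (if n \<le> 212 then (if n \<le> 211 then (if n \<le> 210 then 2260610602 else 2267782286) else 2274911186) else (if n \<le> 214 then (if n \<le> 213 then 2282002755 else 2289057091) else 2296068995))))"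

definition fP_b9 :: "nat \<Rightarrow> int" where "fP_b9 n = (if n \<le> 227 then (if n \<le> 221 then (if n \<le> 218 then (if n \<le> 217 then (if n \<le> 216 then 2303043876 else 2309981832) else 2316877708) else (if n \<le> 220 then (if n \<le> 219 then 2323736869 else 2330554190) else 2337329799)) else (if n \<le> 224 then (if n \<le> 223 then (if n \<le> 222 then 2344069015 else 2350766759) else 2357428320) else (if n \<le> 226 then (if n \<le> 225 then 2364048649 else 2370627874) else 2377166123))) else (if n \<le> 233 then (if n \<le> 230 then (if n \<le> 229 then (if n \<le> 228 then 2383668623 else 2390130387) else 2396551543) else (if n \<le> 232 then (if n \<le> 231 then 2402932219 else 2409272543) else 2415572643)) else (if n \<le> 236 then (if n \<le> 235 then (if n \<le> 234 then 2421832647 else 2428052683) else 2434232879) else (if n \<le> 238 then (if n \<le> 237 then 2440373363 else 2446474263) else 2452535707))))"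

definition fP_b10 :: "nat \<Rightarrow> int" where "fP_b10 n = (if n \<le> 251 then (if n \<le> 245 then (if n \<le> 242 then (if n \<le> 241 then (if n \<le> 240 then 2458552916 else 2464530941) else 2470469910) else (if n \<le> 244 then (if n \<le> 243 then 2476365094 else 2482221494) else 2488039238)) else (if n \<le> 248 then (if n \<le> 247 then (if n \<le> 246 then 2493813647 else 2499549672) else 2505242668) else (if n \<le> 250 then (if n \<le> 249 then 2510897552 else 2516509713) else 2522084034))) else (if n \<le> 257 then (if n \<le> 254 then (if n \<le> 253 then (if n \<le> 252 then 2527615938 else 2533105587) else 2538557812) else (if n \<le> 256 then (if n \<le> 255 then 2543968088 else 2549336577) else 2554663441)) else (if n \<le> 260 then (if n \<le> 259 then (if n \<le> 258 then 2559948842 else 2565192942) else 2570395903) else (if n \<le> 262 then (if n \<le> 261 then 2575557887 else 2580679056) else 2585759572))))"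

definition fP_b11 :: "nat \<Rightarrow> int" where "fP_b11 n = (if n \<le> 275 then (if n \<le> 269 then (if n \<le> 266 then (if n \<le> 265 then (if n \<le> 264 then 2590799597 else 2595799293) else 2600758822) else (if n \<le> 268 then (if n \<le> 267 then 2605678346 else 2610553610) else 2615389211)) else (if n \<le> 272 then (if n \<le> 271 then (if n \<le> 270 then 2620185311 else 2624937711) else 2629650952) else (if n \<le> 274 then (if n \<le> 273 then 2634320873 else 2638951977) else 2643540141))) else (if n \<le> 281 then (if n \<le> 278 then (if n \<le> 277 then (if n \<le> 276 then 2648089830 else 2652596959) else 2657061728) else (if n \<le> 280 then (if n \<le> 279 then 2661488544 else 2665873380) else 2670216436)) else (if n \<le> 284 then (if n \<le> 283 then (if n \<le> 282 then 2674517912 else 2678778008) else 2682996924) else (if n \<le> 286 then (if n \<le> 285 then 2687174860 else 2691312016) else 2695408592))))"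

definition fP_b12 :: "nat \<Rightarrow> int" where "fP_b12 n = (if n \<le> 299 then (if n \<le> 293 then (if n \<le> 290 then (if n \<le> 289 then (if n \<le> 288 then 2699464788 else 2703480804) else 2707456840) else (if n \<le> 292 then (if n \<le> 291 then 2711389129 else 2715281858) else 2719135227)) else (if n \<le> 296 then (if n \<le> 295 then (if n \<le> 294 then 2722945531 else 2726716895) else 2730445656) else (if n \<le> 298 then (if n \<le> 297 then 2734135897 else 2737783997) else 2741390198))) else (if n \<le> 305 then (if n \<le> 302 then (if n \<le> 301 then (if n \<le> 300 then 2744958519 else 2748485403) else 2751971092) else (if n \<le> 304 then (if n \<le> 303 then 2755415828 else 2758819853) else 2762183409)) else (if n \<le> 308 then (if n \<le> 307 then (if n \<le> 306 then 2765506738 else 2768790082) else 2772033683) else (if n \<le> 310 then (if n \<le> 309 then 2775237783 else 2778402624) else 2781528448))))"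

definition fP_b13 :: "nat \<Rightarrow> int" where "fP_b13 n = (if n \<le> 323 then (if n \<le> 317 then (if n \<le> 314 then (if n \<le> 313 then (if n \<le> 312 then 2784611984 else 2787657009) else 2790663765) else (if n \<le> 316 then (if n \<le> 315 then 2793629049 else 2796556570) else 2799443171)) else (if n \<le> 320 then (if n \<le> 319 then (if n \<le> 318 then 2802289140 else 2805098116) else 2807867012) else (if n \<le> 322 then (if n \<le> 321 then 2810596116 else 2813285716) else 2815936100))) else (if n \<le> 329 then (if n \<le> 326 then (if n \<le> 325 then (if n \<le> 324 then 2818547556 else 2821120372) else 2823654836) else (if n \<le> 328 then (if n \<le> 327 then 2826151236 else 2828609860) else 2831030996)) else (if n \<le> 332 then (if n \<le> 331 then (if n \<le> 330 then 2833414932 else 2835758893) else 2838066254) else (if n \<le> 334 then (if n \<le> 333 then 2840334290 else 2842566326) else 2844759687))))"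

definition fP_b14 :: "nat \<Rightarrow> int" where "fP_b14 n = (if n \<le> 347 then (if n \<le> 341 then (if n \<le> 338 then (if n \<le> 337 then (if n \<le> 336 then 2846917648 else 2849037584) else 2851119833) else (if n \<le> 340 then (if n \<le> 339 then 2853164733 else 2855172622) else 2857146647)) else (if n \<le> 344 then (if n \<le> 343 then (if n \<le> 342 then 2859084311 else 2860983195) else 2862846420) else (if n \<le> 346 then (if n \<le> 345 then 2864674324 else 2866467245) else 2868225521))) else (if n \<le> 353 then (if n \<le> 350 then (if n \<le> 349 then (if n \<le> 348 then 2869946865 else 2871634266) else 2873285491) else (if n \<le> 352 then (if n \<le> 351 then 2874903475 else 2876486039) else 2878033575)) else (if n \<le> 356 then (if n \<le> 355 then (if n \<le> 354 then 2879548936 else 2881030025) else 2882477234) else (if n \<le> 358 then (if n \<le> 357 then 2883890955 else 2885271580) else 2886619501))))"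

definition fP_b15 :: "nat \<Rightarrow> int" where "fP_b15 n = (if n \<le> 371 then (if n \<le> 365 then (if n \<le> 362 then (if n \<le> 361 then (if n \<le> 360 then 2887935110 else 2889216534) else 2890466458) else (if n \<le> 364 then (if n \<le> 363 then 2891685274 else 2892871195) else 2894026820)) else (if n \<le> 368 then (if n \<le> 367 then (if n \<le> 366 then 2895150420 else 2896242445) else 2897305406) else (if n \<le> 370 then (if n \<le> 369 then 2898337662 else 2899339663) else 2900311859))) else (if n \<le> 377 then (if n \<le> 374 then (if n \<le> 373 then (if n \<le> 372 then 2901254700 else 2902168636) else 2903054117) else (if n \<le> 376 then (if n \<le> 375 then 2903911593 else 2904739693) else 2905540718)) else (if n \<le> 380 then (if n \<le> 379 then (if n \<le> 378 then 2906313359 else 2907059855) else 2907778959) else (if n \<le> 382 then (if n \<le> 381 then 2908471183 else 2909138672) else 2909780273))))"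

definition fP_b16 :: "nat \<Rightarrow> int" where "fP_b16 n = (if n \<le> 395 then (if n \<le> 389 then (if n \<le> 386 then (if n \<le> 385 then (if n \<le> 384 then 2910396498 else 2910987859) else 2911554868) else (if n \<le> 388 then (if n \<le> 387 then 2912098037 else 2912616437) else 2913112053)) else (if n \<le> 392 then (if n \<le> 391 then (if n \<le> 390 then 2913585397 else 2914035638) else 2914464663) else (if n \<le> 394 then (if n \<le> 393 then 2914871707 else 2915257348) else 2915622164))) else (if n \<le> 401 then (if n \<le> 398 then (if n \<le> 397 then (if n \<le> 396 then 2915966733 else 2916291633) else 2916597442) else (if n \<le> 400 then (if n \<le> 399 then 2916884738 else 2917154099) else 2917406103)) else (if n \<le> 404 then (if n \<le> 403 then (if n \<le> 402 then 2917640359 else 2917858448) else 2918060049) else (if n \<le> 406 then (if n \<le> 405 then 2918245810 else 2918416379) else 2918573195))))"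

definition fP_b17 :: "nat \<Rightarrow> int" where "fP_b17 n = (if n \<le> 419 then (if n \<le> 413 then (if n \<le> 410 then (if n \<le> 409 then (if n \<le> 408 then 2918716079 else 2918844960) else 2918961241) else (if n \<le> 412 then (if n \<le> 411 then 2919065570 else 2919158595) else 2919240391)) else (if n \<le> 416 then (if n \<le> 415 then (if n \<le> 414 then 2919312215 else 2919374216) else 2919427116) else (if n \<le> 418 then (if n \<le> 417 then 2919472060 else 2919509309) else 2919539585))) else (if n \<le> 425 then (if n \<le> 422 then (if n \<le> 421 then (if n \<le> 420 then 2919563301 else 2919581526) else 2919594982) else (if n \<le> 424 then (if n \<le> 423 then 2919604391 else 2919610320) else 2919613569)) else (if n \<le> 428 then (if n \<le> 427 then (if n \<le> 426 then 2919615013 else 2919615337) else 2919615341) else (if n \<le> 430 then (if n \<le> 429 then 2919615825 else 2919617589) else 2919621558))))"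

definition fP_b18 :: "nat \<Rightarrow> int" where "fP_b18 n = (if n \<le> 443 then (if n \<le> 437 then (if n \<le> 434 then (if n \<le> 433 then (if n \<le> 432 then 2919628447 else 2919639056) else 2919654432) else (if n \<le> 436 then (if n \<le> 435 then 2919675457 else 2919702682) else 2919737278)) else (if n \<le> 440 then (if n \<le> 439 then (if n \<le> 438 then 2919780127 else 2919832111) else 2919894611) else (if n \<le> 442 then (if n \<le> 441 then 2919968052 else 2920053316) else 2920151912))) else (if n \<le> 449 then (if n \<le> 446 then (if n \<le> 445 then (if n \<le> 444 then 2920264808 else 2920392972) else 2920537372) else (if n \<le> 448 then (if n \<le> 447 then 2920698976 else 2920878752) else 2921077668)) else (if n \<le> 452 then (if n \<le> 451 then (if n \<le> 450 then 2921297629 else 2921538710) else 2921802906) else (if n \<le> 454 then (if n \<le> 453 then 2922090202 else 2922402683) else 2922741407))))"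

definition fP_b19 :: "nat \<Rightarrow> int" where "fP_b19 n = (if n \<le> 467 then (if n \<le> 461 then (if n \<le> 458 then (if n \<le> 457 then (if n \<le> 456 then 2923108643 else 2923504284) else 2923929388) else (if n \<le> 460 then (if n \<le> 459 then 2924386364 else 2924874965) else 2925397694)) else (if n \<le> 464 then (if n \<le> 463 then (if n \<le> 462 then 2925955703 else 2926550144) else 2927182169) else (if n \<le> 466 then (if n \<le> 465 then 2927854569 else 2928566905) else 2929322066))) else (if n \<le> 473 then (if n \<le> 470 then (if n \<le> 469 then (if n \<le> 468 then 2930121302 else 2930964026) else 2931853275) else (if n \<le> 472 then (if n \<le> 471 then 2932792236 else 2933780272) else 2934810497)) else (if n \<le> 476 then (if n \<le> 475 then (if n \<le> 474 then 2935881722 else 2936994747) else 2938150372) else (if n \<le> 478 then (if n \<le> 477 then 2939349397 else 2940592622) else 2941883118))))"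

definition fP_b20 :: "nat \<Rightarrow> int" where "fP_b20 n = (if n \<le> 491 then (if n \<le> 485 then (if n \<le> 482 then (if n \<le> 481 then (if n \<le> 480 then 2943219454 else 2944604783) else 2946037592) else (if n \<le> 484 then (if n \<le> 483 then 2947521116 else 2949056237) else 2950643837)) else (if n \<le> 488 then (if n \<le> 487 then (if n \<le> 486 then 2952284798 else 2953980002) else 2955732978) else (if n \<le> 490 then (if n \<le> 489 then 2957542003 else 2959410692) else 2961337236))) else (if n \<le> 497 then (if n \<le> 494 then (if n \<le> 493 then (if n \<le> 492 then 2963325336 else 2965375960) else 2967490076) else (if n \<le> 496 then (if n \<le> 495 then 2969668652 else 2971915653) else 2974229094)) else (if n \<le> 500 then (if n \<le> 499 then (if n \<le> 498 then 2976613030 else 2979065386) else 2981590307) else (if n \<le> 502 then (if n \<le> 501 then 2984188851 else 2986862076) else 2989611040))))"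

definition fP_b21 :: "nat \<Rightarrow> int" where "fP_b21 n = (if n \<le> 515 then (if n \<le> 509 then (if n \<le> 506 then (if n \<le> 505 then (if n \<le> 504 then 2992436801 else 2995343826) else 2998329810) else (if n \<le> 508 then (if n \<le> 507 then 3001399314 else 3004553490) else 3007793490)) else (if n \<le> 512 then (if n \<le> 511 then (if n \<le> 510 then 3011120466 else 3014535570) else 3018039954) else (if n \<le> 514 then (if n \<le> 513 then 3021638563 else 3025332647) else 3029119563))) else (if n \<le> 521 then (if n \<le> 518 then (if n \<le> 517 then (if n \<le> 516 then 3033004404 else 3036988420) else 3041076904) else (if n \<le> 520 then (if n \<le> 519 then 3045267113 else 3049560297) else 3053961901)) else (if n \<le> 524 then (if n \<le> 523 then (if n \<le> 522 then 3058473277 else 3063095777) else 3067830753) else (if n \<le> 526 then (if n \<le> 525 then 3072679557 else 3077647998) else 3082733023))))"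

definition fP_b22 :: "nat \<Rightarrow> int" where "fP_b22 n = (if n \<le> 539 then (if n \<le> 533 then (if n \<le> 530 then (if n \<le> 529 then (if n \<le> 528 then 3087940547 else 3093272028) else 3098728924) else (if n \<le> 532 then (if n \<le> 531 then 3104312693 else 3110029574) else 3115876298)) else (if n \<le> 536 then (if n \<le> 535 then (if n \<le> 534 then 3121859214 else 3127979890) else 3134239894) else (if n \<le> 538 then (if n \<le> 537 then 3140640794 else 3147189275) else 3153887019))) else (if n \<le> 545 then (if n \<le> 542 then (if n \<le> 541 then (if n \<le> 540 then 3160730475 else 3167726500) else 3174876776) else (if n \<le> 544 then (if n \<le> 543 then 3182188392 else 3189657681) else 3197291850)) else (if n \<le> 548 then (if n \<le> 547 then (if n \<le> 546 then 3205092699 else 3213062028) else 3221201637) else (if n \<le> 550 then (if n \<le> 549 then 3229519093 else 3238016318) else 3246695234))))"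

definition fP_b23 :: "nat \<Rightarrow> int" where "fP_b23 n = (if n \<le> 563 then (if n \<le> 557 then (if n \<le> 554 then (if n \<le> 553 then (if n \<le> 552 then 3255557763 else 3264605827) else 3273847427) else (if n \<le> 556 then (if n \<le> 555 then 3283278468 else 3292907077) else 3302735302)) else (if n \<le> 560 then (if n \<le> 559 then (if n \<le> 558 then 3312771526 else 3323011526) else 3333463815) else (if n \<le> 562 then (if n \<le> 561 then 3344130571 else 3355020571) else 3366129460))) else (if n \<le> 569 then (if n \<le> 566 then (if n \<le> 565 then (if n \<le> 564 then 3377466149 else 3389032950) else 3400832175) else (if n \<le> 568 then (if n \<le> 567 then 3412873075 else 3425151091) else 3437675612)) else (if n \<le> 572 then (if n \<le> 571 then (if n \<le> 570 then 3450449088 else 3463481188) else 3476767213) else (if n \<le> 574 then (if n \<le> 573 then 3490316974 else 3504140498) else 3518233014))))"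

definition fP_b24 :: "nat \<Rightarrow> int" where "fP_b24 n = (if n \<le> 587 then (if n \<le> 581 then (if n \<le> 578 then (if n \<le> 577 then (if n \<le> 576 then 3532604695 else 3547258279) else 3562196504) else (if n \<le> 580 then (if n \<le> 579 then 3577429913 else 3592961394) else 3608793835)) else (if n \<le> 584 then (if n \<le> 583 then (if n \<le> 582 then 3624930124 else 3641381260) else 3658150285) else (if n \<le> 586 then (if n \<le> 585 then 3675240241 else 3692662517) else 3710420313))) else (if n \<le> 593 then (if n \<le> 590 then (if n \<le> 589 then (if n \<le> 588 then 3728516829 else 3746955265) else 3765747490) else (if n \<le> 592 then (if n \<le> 591 then 3784896866 else 3804415590) else 3824307190)) else (if n \<le> 596 then (if n \<le> 595 then (if n \<le> 594 then 3844575194 else 3865223130) else 3886263699) else (if n \<le> 598 then (if n \<le> 597 then 3907700599 else 3929546875) else 3951806399))))"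

definition fP_b25 :: "nat \<Rightarrow> int" where "fP_b25 n = (if n \<le> 611 then (if n \<le> 605 then (if n \<le> 602 then (if n \<le> 601 then (if n \<le> 600 then 3974483043 else 3997580679) else 4021112880) else (if n \<le> 604 then (if n \<le> 603 then 4045093489 else 4069526738) else 4094416859)) else (if n \<le> 608 then (if n \<le> 607 then (if n \<le> 606 then 4119768084 else 4145594808) else 4171901449) else (if n \<le> 610 then (if n \<le> 609 then 4198702778 else 4226003403) else 4253818479))) else (if n \<le> 617 then (if n \<le> 614 then (if n \<le> 613 then (if n \<le> 612 then 4282152808 else 4311011192) else 4340409276) else (if n \<le> 616 then (if n \<le> 615 then 4370363005 else 4400877581) else 4431958206)) else (if n \<le> 620 then (if n \<le> 619 then (if n \<le> 618 then 4463621335 else 4495872376) else 4528716737) else (if n \<le> 622 then (if n \<le> 621 then 4562182962 else 4596265206) else 4630992655))))"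

definition fP_b26 :: "nat \<Rightarrow> int" where "fP_b26 n = (if n \<le> 635 then (if n \<le> 629 then (if n \<le> 626 then (if n \<le> 625 then (if n \<le> 624 then 4666359464 else 4702395473) else 4739094837) else (if n \<le> 628 then (if n \<le> 627 then 4776488062 else 4814581646) else 4853382087)) else (if n \<le> 632 then (if n \<le> 631 then (if n \<le> 630 then 4892908456 else 4933180172) else 4974204197) else (if n \<le> 634 then (if n \<le> 633 then 5016000422 else 5058576047) else 5101951443))) else (if n \<le> 641 then (if n \<le> 638 then (if n \<le> 637 then (if n \<le> 636 then 5146147347 else 5191171447) else 5237044976) else (if n \<le> 640 then (if n \<le> 639 then 5283789545 else 5331413346) else 5379952435)) else (if n \<le> 644 then (if n \<le> 643 then (if n \<le> 642 then 5429401459 else 5479797260) else 5531148816) else (if n \<le> 646 then (if n \<le> 645 then 5583479572 else 5636813381) else 5691159765))))"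

definition fP_b27 :: "nat \<Rightarrow> int" where "fP_b27 n = (if n \<le> 659 then (if n \<le> 653 then (if n \<le> 650 then (if n \<le> 649 then (if n \<le> 648 then 5746558014 else 5803018210) else 5860565606) else (if n \<le> 652 then (if n \<le> 651 then 5919225887 else 5979025176) else 6039974425)) else (if n \<le> 656 then (if n \<le> 655 then (if n \<le> 654 then 6102116114 else 6165461795) else 6230055164) else (if n \<le> 658 then (if n \<le> 657 then 6295908389 else 6363066414) else 6431542039))) else (if n \<le> 665 then (if n \<le> 662 then (if n \<le> 661 then (if n \<le> 660 then 6501364775 else 6572581496) else 6645205980) else (if n \<le> 664 then (if n \<le> 663 then 6719286429 else 6794854678) else 6871943078)) else (if n \<le> 668 then (if n \<le> 667 then (if n \<le> 666 then 6950584502 else 7030830266) else 7112696570) else (if n \<le> 670 then (if n \<le> 669 then 7196236170 else 7281502926) else 7368514510))))"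

definition fP_b28 :: "nat \<Rightarrow> int" where "fP_b28 n = (if n \<le> 683 then (if n \<le> 677 then (if n \<le> 674 then (if n \<le> 673 then (if n \<le> 672 then 7457326286 else 7547994770) else 7640558411) else (if n \<le> 676 then (if n \<le> 675 then 7735056252 else 7831547581) else 7930092910)) else (if n \<le> 680 then (if n \<le> 679 then (if n \<le> 678 then 8030733934 else 8133533255) else 8238534264) else (if n \<le> 682 then (if n \<le> 681 then 8345822428 else 8455443328) else 8567464384))) else (if n \<le> 689 then (if n \<le> 686 then (if n \<le> 685 then (if n \<le> 684 then 8681975785 else 8799026546) else 8918688267) else (if n \<le> 688 then (if n \<le> 687 then 9039688267 else 9160688267) else 9281688267)) else (if n \<le> 692 then (if n \<le> 691 then (if n \<le> 690 then 9402688267 else 9523688267) else 9644688267) else (if n \<le> 694 then (if n \<le> 693 then 9765688267 else 9886688267) else 10007688267))))"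

definition fP_b29 :: "nat \<Rightarrow> int" where "fP_b29 n = (if n \<le> 707 then (if n \<le> 701 then (if n \<le> 698 then (if n \<le> 697 then (if n \<le> 696 then 10128688267 else 10249688267) else 10370688267) else (if n \<le> 700 then (if n \<le> 699 then 10491688267 else 10612688267) else 10733688267)) else (if n \<le> 704 then (if n \<le> 703 then (if n \<le> 702 then 10854688267 else 10975688267) else 11096688267) else (if n \<le> 706 then (if n \<le> 705 then 11217688267 else 11338688267) else 11459688267))) else (if n \<le> 713 then (if n \<le> 710 then (if n \<le> 709 then (if n \<le> 708 then 11580688267 else 11701688267) else 11822688267) else (if n \<le> 712 then (if n \<le> 711 then 11943688267 else 12064688267) else 12185688267)) else (if n \<le> 716 then (if n \<le> 715 then (if n \<le> 714 then 12306688267 else 12427688267) else 12548688267) else (if n \<le> 718 then (if n \<le> 717 then 12669688267 else 12790688267) else 12911688267))))"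

definition fP_b30 :: "nat \<Rightarrow> int" where "fP_b30 n = (if n \<le> 731 then (if n \<le> 725 then (if n \<le> 722 then (if n \<le> 721 then (if n \<le> 720 then 13032688267 else 13153688267) else 13274688267) else (if n \<le> 724 then (if n \<le> 723 then 13395688267 else 13516688267) else 13637688267)) else (if n \<le> 728 then (if n \<le> 727 then (if n \<le> 726 then 13758688267 else 13879688267) else 14000688267) else (if n \<le> 730 then (if n \<le> 729 then 14121688267 else 14242688267) else 14363688267))) else (if n \<le> 737 then (if n \<le> 734 then (if n \<le> 733 then (if n \<le> 732 then 14484688267 else 14605688267) else 14726688267) else (if n \<le> 736 then (if n \<le> 735 then 14847688267 else 14968688267) else 15089688267)) else (if n \<le> 740 then (if n \<le> 739 then (if n \<le> 738 then 15210688267 else 15331688267) else 15452688267) else (if n \<le> 742 then (if n \<le> 741 then 15573688267 else 15694688267) else 15815688267))))"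

definition fP_b31 :: "nat \<Rightarrow> int" where "fP_b31 n = (if n \<le> 746 then (if n \<le> 745 then (if n \<le> 744 then 15936688267 else 16057688267) else 16178688267) else (if n \<le> 747 then 16299688267 else 16420688267))"

definition fP :: "nat \<Rightarrow> int" where "fP n = (if n \<le> 383 then (if n \<le> 191 then (if n \<le> 95 then (if n \<le> 47 then (if n \<le> 23 then fP_b0 n else fP_b1 n) else (if n \<le> 71 then fP_b2 n else fP_b3 n)) else (if n \<le> 143 then (if n \<le> 119 then fP_b4 n else fP_b5 n) else (if n \<le> 167 then fP_b6 n else fP_b7 n))) else (if n \<le> 287 then (if n \<le> 239 then (if n \<le> 215 then fP_b8 n else fP_b9 n) else (if n \<le> 263 then fP_b10 n else fP_b11 n)) else (if n \<le> 335 then (if n \<le> 311 then fP_b12 n else fP_b13 n) else (if n \<le> 359 then fP_b14 n else fP_b15 n)))) else (if n \<le> 575 then (if n \<le> 479 then (if n \<le> 431 then (if n \<le> 407 then fP_b16 n else fP_b17 n) else (if n \<le> 455 then fP_b18 n else fP_b19 n)) else (if n \<le> 527 then (if n \<le> 503 then fP_b20 n else fP_b21 n) else (if n \<le> 551 then fP_b22 n else fP_b23 n))) else (if n \<le> 671 then (if n \<le> 623 then (if n \<le> 599 then fP_b24 n else fP_b25 n) else (if n \<le> 647 then fP_b26 n else fP_b27 n)) else (if n \<le> 719 then (if n \<le> 695 then fP_b28 n else fP_b29 n) else (if n \<le> 743 then fP_b30 n else fP_b31 n)))))"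

lemmas fP_defs = fP_def fP_b0_def fP_b1_def fP_b2_def fP_b3_def fP_b4_def fP_b5_def fP_b6_def fP_b7_def fP_b8_def fP_b9_def fP_b10_def fP_b11_def fP_b12_def fP_b13_def fP_b14_def fP_b15_def fP_b16_def fP_b17_def fP_b18_def fP_b19_def fP_b20_def fP_b21_def fP_b22_def fP_b23_def fP_b24_def fP_b25_def fP_b26_def fP_b27_def fP_b28_def fP_b29_def fP_b30_def fP_b31_def

definition fQ_b0 :: "nat \<Rightarrow> int" where "fQ_b0 n = (if n \<le> 11 then (if n \<le> 5 then (if n \<le> 2 then (if n \<le> 1 then (if n \<le> 0 then 0 else 39513796) else 79065317) else (if n \<le> 4 then (if n \<le> 3 then 118654581 else 158294197) else 197971598)) else (if n \<le> 8 then (if n \<le> 7 then (if n \<le> 6 then 237686802 else 277452438) else 317255919) else (if n \<le> 10 then (if n \<le> 9 then 357097263 else 396989119) else 436918880))) else (if n \<le> 17 then (if n \<le> 14 then (if n \<le> 13 then (if n \<le> 12 then 476886564 else 516904840) else 556961081) else (if n \<le> 16 then (if n \<le> 15 then 597067970 else 637212866) else 677395787)) else (if n \<le> 20 then (if n \<le> 19 then (if n \<le> 18 then 717629436 else 757901152) else 798223652) else (if n \<le> 22 then (if n \<le> 21 then 838584261 else 878995710) else 919445310))))"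

definition fQ_b1 :: "nat \<Rightarrow> int" where "fQ_b1 n = (if n \<le> 35 then (if n \<le> 29 then (if n \<le> 26 then (if n \<le> 25 then (if n \<le> 24 then 959945806 else 1000484495) else 1041074136) else (if n \<le> 28 then (if n \<le> 27 then 1081702012 else 1122380896) else 1163098057)) else (if n \<le> 32 then (if n \<le> 31 then (if n \<le> 30 then 1203866282 else 1244685603) else 1285543267) else (if n \<le> 34 then (if n \<le> 33 then 1326452083 else 1367412083) else 1408410492))) else (if n \<le> 41 then (if n \<le> 38 then (if n \<le> 37 then (if n \<le> 36 then 1449460141 else 1490561062) else 1531700458) else (if n \<le> 40 then (if n \<le> 39 then 1572891182 else 1614133266) else 1655413891)) else (if n \<le> 44 then (if n \<le> 43 then (if n \<le> 42 then 1696745932 else 1738129421) else 1779564390) else (if n \<le> 46 then (if n \<le> 45 then 1821050871 else 1862576007) else 1904152711))))"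

definition fQ_b2 :: "nat \<Rightarrow> int" where "fQ_b2 n = (if n \<le> 59 then (if n \<le> 53 then (if n \<le> 50 then (if n \<le> 49 then (if n \<le> 48 then 1945781015 else 1987460951) else 2029192551) else (if n \<le> 52 then (if n \<le> 51 then 2070975847 else 2112810871) else 2154684712)) else (if n \<le> 56 then (if n \<le> 55 then (if n \<le> 54 then 2196610337 else 2238587778) else 2280617067) else (if n \<le> 58 then (if n \<le> 57 then 2322698236 else 2364831317) else 2407016342))) else (if n \<le> 65 then (if n \<le> 62 then (if n \<le> 61 then (if n \<le> 60 then 2449253343 else 2491542352) else 2533883401) else (if n \<le> 64 then (if n \<le> 63 then 2576276522 else 2618721747) else 2661219108)) else (if n \<le> 68 then (if n \<le> 67 then (if n \<le> 66 then 2703781684 else 2746396468) else 2789063492) else (if n \<le> 70 then (if n \<le> 69 then 2831782788 else 2874554388) else 2917378324))))"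

definition fQ_b3 :: "nat \<Rightarrow> int" where "fQ_b3 n = (if n \<le> 83 then (if n \<le> 77 then (if n \<le> 74 then (if n \<le> 73 then (if n \<le> 72 then 2960254628 else 3003196437) else 3046190686) else (if n \<le> 76 then (if n \<le> 75 then 3089237407 else 3132336632) else 3175501532)) else (if n \<le> 80 then (if n \<le> 79 then (if n \<le> 78 then 3218719008 else 3261989092) else 3305324981) else (if n \<le> 82 then (if n \<le> 81 then 3348713550 else 3392154831) else 3435662047))) else (if n \<le> 89 then (if n \<le> 86 then (if n \<le> 85 then (if n \<le> 84 then 3479222047 else 3522834863) else 3566513744) else (if n \<le> 88 then (if n \<le> 87 then 3610245513 else 3654043437) else 3697894321)) else (if n \<le> 92 then (if n \<le> 91 then (if n \<le> 90 then 3741811450 else 3785781611) else 3829818107) else (if n \<le> 94 then (if n \<le> 93 then 3873907707 else 3918063732) else 3962272933))))"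

definition fQ_b4 :: "nat \<Rightarrow> int" where "fQ_b4 n = (if n \<le> 107 then (if n \<le> 101 then (if n \<le> 98 then (if n \<le> 97 then (if n \<le> 96 then 4006548649 else 4050890930) else 4095286499) else (if n \<le> 100 then (if n \<le> 99 then 4139748723 else 4184264307) else 4228846636)) else (if n \<le> 104 then (if n \<le> 103 then (if n \<le> 102 then 4273495760 else 4318211729) else 4362981210) else (if n \<le> 106 then (if n \<le> 105 then 4407817626 else 4452721027) else 4497691463))) else (if n \<le> 113 then (if n \<le> 110 then (if n \<le> 109 then (if n \<le> 108 then 4542715563 else 4587806788) else 4632965188) else (if n \<le> 112 then (if n \<le> 111 then 4678190813 else 4723483713) else 4768843938)) else (if n \<le> 116 then (if n \<le> 115 then (if n \<le> 114 then 4814271538 else 4859766563) else 4905315564) else (if n \<le> 118 then (if n \<le> 117 then 4950932080 else 4996616161) else 5042367857))))"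

definition fQ_b5 :: "nat \<Rightarrow> int" where "fQ_b5 n = (if n \<le> 131 then (if n \<le> 125 then (if n \<le> 122 then (if n \<le> 121 then (if n \<le> 120 then 5088187218 else 5134087843) else 5180056243) else (if n \<le> 124 then (if n \<le> 123 then 5226092468 else 5272196568) else 5318368593)) else (if n \<le> 128 then (if n \<le> 127 then (if n \<le> 126 then 5364608593 else 5410916618) else 5457292718) else (if n \<le> 130 then (if n \<le> 129 then 5503750574 else 5550276615) else 5596870891))) else (if n \<le> 137 then (if n \<le> 134 then (if n \<le> 133 then (if n \<le> 132 then 5643533452 else 5690278021) else 5737090985) else (if n \<le> 136 then (if n \<le> 135 then 5783972394 else 5830936003) else 5877968167)) else (if n \<le> 140 then (if n \<le> 139 then (if n \<le> 138 then 5925068936 else 5972252097) else 6019503973) else (if n \<le> 142 then (if n \<le> 141 then 6066838373 else 6114241598) else 6161727479))))"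

definition fQ_b6 :: "nat \<Rightarrow> int" where "fQ_b6 n = (if n \<le> 155 then (if n \<le> 149 then (if n \<le> 146 then (if n \<le> 145 then (if n \<le> 144 then 6209282295 else 6256919899) else 6304626548) else (if n \<le> 148 then (if n \<le> 147 then 6352416117 else 6400288678) else 6448230454)) else (if n \<le> 152 then (if n \<le> 151 then (if n \<le> 150 then 6496255354 else 6544363450) else 6592540931) else (if n \<le> 154 then (if n \<le> 153 then 6640801740 else 6689145949) else 6737573630))) else (if n \<le> 161 then (if n \<le> 158 then (if n \<le> 157 then (if n \<le> 156 then 6786070926 else 6834651826) else 6883316402) else (if n \<le> 160 then (if n \<le> 159 then 6932064726 else 6980896870) else 7029812906)) else (if n \<le> 164 then (if n \<le> 163 then (if n \<le> 162 then 7078812906 else 7127896942) else 7177065086) else (if n \<le> 166 then (if n \<le> 165 then 7226317410 else 7275653986) else 7325074886))))"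

definition fQ_b7 :: "nat \<Rightarrow> int" where "fQ_b7 n = (if n \<le> 179 then (if n \<le> 173 then (if n \<le> 170 then (if n \<le> 169 then (if n \<le> 168 then 7374580182 else 7424169946) else 7473844250) else (if n \<le> 172 then (if n \<le> 171 then 7523603166 else 7573446766) else 7623375122)) else (if n \<le> 176 then (if n \<le> 175 then (if n \<le> 174 then 7673402451 else 7723514692) else 7773711917) else (if n \<le> 178 then (if n \<le> 177 then 7824008381 else 7874389985) else 7924856801))) else (if n \<le> 185 then (if n \<le> 182 then (if n \<le> 181 then (if n \<le> 180 then 7975423122 else 8026074811) else 8076811940) else (if n \<le> 184 then (if n \<le> 183 then 8127648840 else 8178571336) else 8229593785)) else (if n \<le> 188 then (if n \<le> 187 then (if n \<le> 186 then 8280716285 else 8331924621) else 8383233190) else (if n \<le> 190 then (if n \<le> 189 then 8434627751 else 8486122727) else 8537718216))))"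

definition fQ_b8 :: "nat \<Rightarrow> int" where "fQ_b8 n = (if n \<le> 203 then (if n \<le> 197 then (if n \<le> 194 then (if n \<le> 193 then (if n \<le> 192 then 8589399937 else 8641182353) else 8693065562) else (if n \<le> 196 then (if n \<le> 195 then 8745049662 else 8797120318) else 8849292047)) else (if n \<le> 200 then (if n \<le> 199 then (if n \<le> 198 then 8901564947 else 8953939116) else 9006414652) else (if n \<le> 202 then (if n \<le> 201 then 9058991653 else 9111670217) else 9164450442))) else (if n \<le> 209 then (if n \<le> 206 then (if n \<le> 205 then (if n \<le> 204 then 9217332426 else 9270316267) else 9323402063) else (if n \<le> 208 then (if n \<le> 207 then 9376589912 else 9429894513) else 9483301377)) else (if n \<le> 212 then (if n \<le> 211 then (if n \<le> 210 then 9536810602 else 9590422286) else 9644151186) else (if n \<le> 214 then (if n \<le> 213 then 9697982755 else 9751917091) else 9805968995))))"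

definition fQ_b9 :: "nat \<Rightarrow> int" where "fQ_b9 n = (if n \<le> 227 then (if n \<le> 221 then (if n \<le> 218 then (if n \<le> 217 then (if n \<le> 216 then 9860123876 else 9914381832) else 9968757708) else (if n \<le> 220 then (if n \<le> 219 then 10023236869 else 10077834190) else 10132549799)) else (if n \<le> 224 then (if n \<le> 223 then (if n \<le> 222 then 10187369015 else 10242306759) else 10297348320) else (if n \<le> 226 then (if n \<le> 225 then 10352508649 else 10407787874) else 10463186123))) else (if n \<le> 233 then (if n \<le> 230 then (if n \<le> 229 then (if n \<le> 228 then 10518688623 else 10574310387) else 10630051543) else (if n \<le> 232 then (if n \<le> 231 then 10685912219 else 10741892543) else 10797992643)) else (if n \<le> 236 then (if n \<le> 235 then (if n \<le> 234 then 10854212647 else 10910552683) else 10967012879) else (if n \<le> 238 then (if n \<le> 237 then 11023593363 else 11080294263) else 11137115707))))"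

definition fQ_b10 :: "nat \<Rightarrow> int" where "fQ_b10 n = (if n \<le> 251 then (if n \<le> 245 then (if n \<le> 242 then (if n \<le> 241 then (if n \<le> 240 then 11194072916 else 11251150941) else 11308349910) else (if n \<le> 244 then (if n \<le> 243 then 11365685094 else 11423141494) else 11480719238)) else (if n \<le> 248 then (if n \<le> 247 then (if n \<le> 246 then 11538433647 else 11596269672) else 11654242668) else (if n \<le> 250 then (if n \<le> 249 then 11712337552 else 11770569713) else 11828924034))) else (if n \<le> 257 then (if n \<le> 254 then (if n \<le> 253 then (if n \<le> 252 then 11887415938 else 11946045587) else 12004797812) else (if n \<le> 256 then (if n \<le> 255 then 12063688088 else 12122716577) else 12181883441)) else (if n \<le> 260 then (if n \<le> 259 then (if n \<le> 258 then 12241188842 else 12300632942) else 12360215903) else (if n \<le> 262 then (if n \<le> 261 then 12419937887 else 12479799056) else 12539799572))))"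

definition fQ_b11 :: "nat \<Rightarrow> int" where "fQ_b11 n = (if n \<le> 275 then (if n \<le> 269 then (if n \<le> 266 then (if n \<le> 265 then (if n \<le> 264 then 12599939597 else 12660219293) else 12720638822) else (if n \<le> 268 then (if n \<le> 267 then 12781198346 else 12841913610) else 12902769211)) else (if n \<le> 272 then (if n \<le> 271 then (if n \<le> 270 then 12963765311 else 13024917711) else 13086210952) else (if n \<le> 274 then (if n \<le> 273 then 13147660873 else 13209251977) else 13271000141))) else (if n \<le> 281 then (if n \<le> 278 then (if n \<le> 277 then (if n \<le> 276 then 13332889830 else 13394936959) else 13457141728) else (if n \<le> 280 then (if n \<le> 279 then 13519488544 else 13581993380) else 13644656436)) else (if n \<le> 284 then (if n \<le> 283 then (if n \<le> 282 then 13707477912 else 13770458008) else 13833596924) else (if n \<le> 286 then (if n \<le> 285 then 13896894860 else 13960352016) else 14023968592))))"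

definition fQ_b12 :: "nat \<Rightarrow> int" where "fQ_b12 n = (if n \<le> 299 then (if n \<le> 293 then (if n \<le> 290 then (if n \<le> 289 then (if n \<le> 288 then 14087744788 else 14151680804) else 14215776840) else (if n \<le> 292 then (if n \<le> 291 then 14280049129 else 14344481858) else 14409075227)) else (if n \<le> 296 then (if n \<le> 295 then (if n \<le> 294 then 14473845531 else 14538776895) else 14603885656) else (if n \<le> 298 then (if n \<le> 297 then 14669155897 else 14734603997) else 14800230198))) else (if n \<le> 305 then (if n \<le> 302 then (if n \<le> 301 then (if n \<le> 300 then 14866018519 else 14931985403) else 14998131092) else (if n \<le> 304 then (if n \<le> 303 then 15064455828 else 15130959853) else 15197643409)) else (if n \<le> 308 then (if n \<le> 307 then (if n \<le> 306 then 15264506738 else 15331550082) else 15398773683) else (if n \<le> 310 then (if n \<le> 309 then 15466177783 else 15533762624) else 15601528448))))"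

definition fQ_b13 :: "nat \<Rightarrow> int" where "fQ_b13 n = (if n \<le> 323 then (if n \<le> 317 then (if n \<le> 314 then (if n \<le> 313 then (if n \<le> 312 then 15669491984 else 15737637009) else 15805963765) else (if n \<le> 316 then (if n \<le> 315 then 15874489049 else 15943196570) else 16012103171)) else (if n \<le> 320 then (if n \<le> 319 then (if n \<le> 318 then 16081209140 else 16150498116) else 16219987012) else (if n \<le> 322 then (if n \<le> 321 then 16289676116 else 16359565716) else 16429656100))) else (if n \<le> 329 then (if n \<le> 326 then (if n \<le> 325 then (if n \<le> 324 then 16499947556 else 16570440372) else 16641134836) else (if n \<le> 328 then (if n \<le> 327 then 16712031236 else 16783129860) else 16854430996)) else (if n \<le> 332 then (if n \<le> 331 then (if n \<le> 330 then 16925934932 else 16997658893) else 17069586254) else (if n \<le> 334 then (if n \<le> 333 then 17141734290 else 17214086326) else 17286659687))))"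

definition fQ_b14 :: "nat \<Rightarrow> int" where "fQ_b14 n = (if n \<le> 347 then (if n \<le> 341 then (if n \<le> 338 then (if n \<le> 337 then (if n \<le> 336 then 17359437648 else 17432437584) else 17505659833) else (if n \<le> 340 then (if n \<le> 339 then 17579104733 else 17652772622) else 17726646647)) else (if n \<le> 344 then (if n \<le> 343 then (if n \<le> 342 then 17800744311 else 17875083195) else 17949646420) else (if n \<le> 346 then (if n \<le> 345 then 18024434324 else 18099447245) else 18174685521))) else (if n \<le> 353 then (if n \<le> 350 then (if n \<le> 349 then (if n \<le> 348 then 18250166865 else 18325874266) else 18401825491) else (if n \<le> 352 then (if n \<le> 351 then 18478003475 else 18554426039) else 18631093575)) else (if n \<le> 356 then (if n \<le> 355 then (if n \<le> 354 then 18707988936 else 18785130025) else 18862517234) else (if n \<le> 358 then (if n \<le> 357 then 18940150955 else 19018031580) else 19096159501))))"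

definition fQ_b15 :: "nat \<Rightarrow> int" where "fQ_b15 n = (if n \<le> 371 then (if n \<le> 365 then (if n \<le> 362 then (if n \<le> 361 then (if n \<le> 360 then 19174535110 else 19253176534) else 19332066458) else (if n \<le> 364 then (if n \<le> 363 then 19411205274 else 19490611195) else 19570266820)) else (if n \<le> 368 then (if n \<le> 367 then (if n \<le> 366 then 19650190420 else 19730382445) else 19810825406) else (if n \<le> 370 then (if n \<le> 369 then 19891537662 else 19972519663) else 20053771859))) else (if n \<le> 377 then (if n \<le> 374 then (if n \<le> 373 then (if n \<le> 372 then 20135294700 else 20217088636) else 20299154117) else (if n \<le> 376 then (if n \<le> 375 then 20381491593 else 20464119693) else 20547020718)) else (if n \<le> 380 then (if n \<le> 379 then (if n \<le> 378 then 20630213359 else 20713679855) else 20797438959) else (if n \<le> 382 then (if n \<le> 381 then 20881491183 else 20965818672) else 21050440273))))"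

definition fQ_b16 :: "nat \<Rightarrow> int" where "fQ_b16 n = (if n \<le> 395 then (if n \<le> 389 then (if n \<le> 386 then (if n \<le> 385 then (if n \<le> 384 then 21135356498 else 21220567859) else 21306074868) else (if n \<le> 388 then (if n \<le> 387 then 21391878037 else 21477996437) else 21564412053)) else (if n \<le> 392 then (if n \<le> 391 then (if n \<le> 390 then 21651125397 else 21738155638) else 21825484663) else (if n \<le> 394 then (if n \<le> 393 then 21913131707 else 22001097348) else 22089382164))) else (if n \<le> 401 then (if n \<le> 398 then (if n \<le> 397 then (if n \<le> 396 then 22177986733 else 22266911633) else 22356157442) else (if n \<le> 400 then (if n \<le> 399 then 22445724738 else 22535614099) else 22625826103)) else (if n \<le> 404 then (if n \<le> 403 then (if n \<le> 402 then 22716380359 else 22807258448) else 22898480049) else (if n \<le> 406 then (if n \<le> 405 then 22990045810 else 23081956379) else 23174193195))))"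

definition fQ_b17 :: "nat \<Rightarrow> int" where "fQ_b17 n = (if n \<le> 419 then (if n \<le> 413 then (if n \<le> 410 then (if n \<le> 409 then (if n \<le> 408 then 23266776079 else 23359724960) else 23453021241) else (if n \<le> 412 then (if n \<le> 411 then 23546665570 else 23640658595) else 23735020391)) else (if n \<le> 416 then (if n \<le> 415 then (if n \<le> 414 then 23829732215 else 23924814216) else 24020267116) else (if n \<le> 418 then (if n \<le> 417 then 24116072060 else 24212249309) else 24308799585))) else (if n \<le> 425 then (if n \<le> 422 then (if n \<le> 421 then (if n \<le> 420 then 24405743301 else 24503061526) else 24600754982) else (if n \<le> 424 then (if n \<le> 423 then 24698824391 else 24797290320) else 24896153569)) else (if n \<le> 428 then (if n \<le> 427 then (if n \<le> 426 then 24995395013 else 25095035337) else 25195075341) else (if n \<le> 430 then (if n \<le> 429 then 25295515825 else 25396357589) else 25497621558))))"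

definition fQ_b18 :: "nat \<Rightarrow> int" where "fQ_b18 n = (if n \<le> 443 then (if n \<le> 437 then (if n \<le> 434 then (if n \<le> 433 then (if n \<le> 432 then 25599288447 else 25701359056) else 25803854432) else (if n \<le> 436 then (if n \<le> 435 then 25906775457 else 26010102682) else 26113857278)) else (if n \<le> 440 then (if n \<le> 439 then (if n \<le> 438 then 26218040127 else 26322652111) else 26427714611) else (if n \<le> 442 then (if n \<le> 441 then 26533208052 else 26639133316) else 26745511912))) else (if n \<le> 449 then (if n \<le> 446 then (if n \<le> 445 then (if n \<le> 444 then 26852344808 else 26959632972) else 27067377372) else (if n \<le> 448 then (if n \<le> 447 then 27175578976 else 27284238752) else 27393357668)) else (if n \<le> 452 then (if n \<le> 451 then (if n \<le> 450 then 27502957629 else 27613018710) else 27723562906) else (if n \<le> 454 then (if n \<le> 453 then 27834570202 else 27946062683) else 28058041407))))"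

definition fQ_b19 :: "nat \<Rightarrow> int" where "fQ_b19 n = (if n \<le> 467 then (if n \<le> 461 then (if n \<le> 458 then (if n \<le> 457 then (if n \<le> 456 then 28170528643 else 28283504284) else 28396969388) else (if n \<le> 460 then (if n \<le> 459 then 28510946364 else 28625414965) else 28740397694)) else (if n \<le> 464 then (if n \<le> 463 then (if n \<le> 462 then 28855895703 else 28971910144) else 29088442169) else (if n \<le> 466 then (if n \<le> 465 then 29205514569 else 29323106905) else 29441242066))) else (if n \<le> 473 then (if n \<le> 470 then (if n \<le> 469 then (if n \<le> 468 then 29559921302 else 29679124026) else 29798873275) else (if n \<le> 472 then (if n \<le> 471 then 29919192236 else 30040060272) else 30161390497)) else (if n \<le> 476 then (if n \<le> 475 then (if n \<le> 474 then 30283161722 else 30405374747) else 30528030372) else (if n \<le> 478 then (if n \<le> 477 then 30651129397 else 30774672622) else 30898683118))))"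

definition fQ_b20 :: "nat \<Rightarrow> int" where "fQ_b20 n = (if n \<le> 491 then (if n \<le> 485 then (if n \<le> 482 then (if n \<le> 481 then (if n \<le> 480 then 31023139454 else 31148064783) else 31273437592) else (if n \<le> 484 then (if n \<le> 483 then 31399281116 else 31525596237) else 31652383837)) else (if n \<le> 488 then (if n \<le> 487 then (if n \<le> 486 then 31779644798 else 31907380002) else 32035612978) else (if n \<le> 490 then (if n \<le> 489 then 32164322003 else 32293530692) else 32423217236))) else (if n \<le> 497 then (if n \<le> 494 then (if n \<le> 493 then (if n \<le> 492 then 32553405336 else 32684095960) else 32815290076) else (if n \<le> 496 then (if n \<le> 495 then 32946988652 else 33079215653) else 33211949094)) else (if n \<le> 500 then (if n \<le> 499 then (if n \<le> 498 then 33345213030 else 33478985386) else 33613290307) else (if n \<le> 502 then (if n \<le> 501 then 33748128851 else 33883502076) else 34019411040))))"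

definition fQ_b21 :: "nat \<Rightarrow> int" where "fQ_b21 n = (if n \<le> 515 then (if n \<le> 509 then (if n \<le> 506 then (if n \<le> 505 then (if n \<le> 504 then 34155856801 else 34292863826) else 34430409810) else (if n \<le> 508 then (if n \<le> 507 then 34568519314 else 34707193490) else 34846433490)) else (if n \<le> 512 then (if n \<le> 511 then (if n \<le> 510 then 34986240466 else 35126615570) else 35267559954) else (if n \<le> 514 then (if n \<le> 513 then 35409098563 else 35551232647) else 35693939563))) else (if n \<le> 521 then (if n \<le> 518 then (if n \<le> 517 then (if n \<le> 516 then 35837244404 else 35981148420) else 36125676904) else (if n \<le> 520 then (if n \<le> 519 then 36270807113 else 36416540297) else 36562901901)) else (if n \<le> 524 then (if n \<le> 523 then (if n \<le> 522 then 36709893277 else 36857515777) else 37005770753) else (if n \<le> 526 then (if n \<le> 525 then 37154659557 else 37304207998) else 37454393023))))"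

definition fQ_b22 :: "nat \<Rightarrow> int" where "fQ_b22 n = (if n \<le> 539 then (if n \<le> 533 then (if n \<le> 530 then (if n \<le> 529 then (if n \<le> 528 then 37605240547 else 37756752028) else 37908928924) else (if n \<le> 532 then (if n \<le> 531 then 38061772693 else 38215309574) else 38369516298)) else (if n \<le> 536 then (if n \<le> 535 then (if n \<le> 534 then 38524419214 else 38680019890) else 38836319894) else (if n \<le> 538 then (if n \<le> 537 then 38993320794 else 39151049275) else 39309507019))) else (if n \<le> 545 then (if n \<le> 542 then (if n \<le> 541 then (if n \<le> 540 then 39468670475 else 39628566500) else 39789196776) else (if n \<le> 544 then (if n \<le> 543 then 39950588392 else 40112717681) else 40275611850)) else (if n \<le> 548 then (if n \<le> 547 then (if n \<le> 546 then 40439272699 else 40603702028) else 40768901637) else (if n \<le> 550 then (if n \<le> 549 then 40934899093 else 41101696318) else 41269295234))))"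

definition fQ_b23 :: "nat \<Rightarrow> int" where "fQ_b23 n = (if n \<le> 563 then (if n \<le> 557 then (if n \<le> 554 then (if n \<le> 553 then (if n \<le> 552 then 41437697763 else 41606905827) else 41776947427) else (if n \<le> 556 then (if n \<le> 555 then 41947798468 else 42119487077) else 42292015302)) else (if n \<le> 560 then (if n \<le> 559 then (if n \<le> 558 then 42465411526 else 42639651526) else 42814763815) else (if n \<le> 562 then (if n \<le> 561 then 42990750571 else 43167640571) else 43345409460))) else (if n \<le> 569 then (if n \<le> 566 then (if n \<le> 565 then (if n \<le> 564 then 43524086149 else 43703672950) else 43884172175) else (if n \<le> 568 then (if n \<le> 567 then 44065613075 else 44247971091) else 44431275612)) else (if n \<le> 572 then (if n \<le> 571 then (if n \<le> 570 then 44615529088 else 44800761188) else 44986947213) else (if n \<le> 574 then (if n \<le> 573 then 45174116974 else 45362300498) else 45551473014))))"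

definition fQ_b24 :: "nat \<Rightarrow> int" where "fQ_b24 n = (if n \<le> 587 then (if n \<le> 581 then (if n \<le> 578 then (if n \<le> 577 then (if n \<le> 576 then 45741664695 else 45932878279) else 46125116504) else (if n \<le> 580 then (if n \<le> 579 then 46318409913 else 46512761394) else 46708173835)) else (if n \<le> 584 then (if n \<le> 583 then (if n \<le> 582 then 46904650124 else 47102221260) else 47300890285) else (if n \<le> 586 then (if n \<le> 585 then 47500660241 else 47701562517) else 47903600313))) else (if n \<le> 593 then (if n \<le> 590 then (if n \<le> 589 then (if n \<le> 588 then 48106776829 else 48311095265) else 48516587490) else (if n \<le> 592 then (if n \<le> 591 then 48723256866 else 48931135590) else 49140227190)) else (if n \<le> 596 then (if n \<le> 595 then (if n \<le> 594 then 49350535194 else 49562063130) else 49774843699) else (if n \<le> 598 then (if n \<le> 597 then 49988880599 else 50204206875) else 50420826399))))"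

definition fQ_b25 :: "nat \<Rightarrow> int" where "fQ_b25 n = (if n \<le> 611 then (if n \<le> 605 then (if n \<le> 602 then (if n \<le> 601 then (if n \<le> 600 then 50638743043 else 50857960679) else 51078512880) else (if n \<le> 604 then (if n \<le> 603 then 51300433489 else 51523726738) else 51748396859)) else (if n \<le> 608 then (if n \<le> 607 then (if n \<le> 606 then 51974448084 else 52201914808) else 52430801449) else (if n \<le> 610 then (if n \<le> 609 then 52661142778 else 52892943403) else 53126238479))) else (if n \<le> 617 then (if n \<le> 614 then (if n \<le> 613 then (if n \<le> 612 then 53361032808 else 53597331192) else 53835169276) else (if n \<le> 616 then (if n \<le> 615 then 54074583005 else 54315577581) else 54558158206)) else (if n \<le> 620 then (if n \<le> 619 then (if n \<le> 618 then 54802361335 else 55048192376) else 55295656737) else (if n \<le> 622 then (if n \<le> 621 then 55544822962 else 55795665206) else 56048252655))))"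

definition fQ_b26 :: "nat \<Rightarrow> int" where "fQ_b26 n = (if n \<le> 635 then (if n \<le> 629 then (if n \<le> 626 then (if n \<le> 625 then (if n \<le> 624 then 56302559464 else 56558655473) else 56816514837) else (if n \<le> 628 then (if n \<le> 627 then 57076208062 else 57337741646) else 57601122087)) else (if n \<le> 632 then (if n \<le> 631 then (if n \<le> 630 then 57866388456 else 58133580172) else 58402704197) else (if n \<le> 634 then (if n \<le> 633 then 58673800422 else 58946876047) else 59221971443))) else (if n \<le> 641 then (if n \<le> 638 then (if n \<le> 637 then (if n \<le> 636 then 59499127347 else 59778351447) else 60059684976) else (if n \<le> 640 then (if n \<le> 639 then 60343169545 else 60628813346) else 60916692435)) else (if n \<le> 644 then (if n \<le> 643 then (if n \<le> 642 then 61206781459 else 61499157260) else 61793828816) else (if n \<le> 646 then (if n \<le> 645 then 62090839572 else 62390233381) else 62692019765))))"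

definition fQ_b27 :: "nat \<Rightarrow> int" where "fQ_b27 n = (if n \<le> 659 then (if n \<le> 653 then (if n \<le> 650 then (if n \<le> 649 then (if n \<le> 648 then 62996278014 else 63303018210) else 63612285606) else (if n \<le> 652 then (if n \<le> 651 then 63924125887 else 64238585176) else 64555674425)) else (if n \<le> 656 then (if n \<le> 655 then (if n \<le> 654 then 64875476114 else 65198001795) else 65523335164) else (if n \<le> 658 then (if n \<le> 657 then 65851488389 else 66182546414) else 66516522039))) else (if n \<le> 665 then (if n \<le> 662 then (if n \<le> 661 then (if n \<le> 660 then 66853464775 else 67193461496) else 67536525980) else (if n \<le> 664 then (if n \<le> 663 then 67882746429 else 68232174678) else 68584863078)) else (if n \<le> 668 then (if n \<le> 667 then (if n \<le> 666 then 68940864502 else 69300270266) else 69663096570) else (if n \<le> 670 then (if n \<le> 669 then 70029436170 else 70399382926) else 70772954510))))"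

definition fQ_b28 :: "nat \<Rightarrow> int" where "fQ_b28 n = (if n \<le> 683 then (if n \<le> 677 then (if n \<le> 674 then (if n \<le> 673 then (if n \<le> 672 then 71150246286 else 71531354770) else 71916338411) else (if n \<le> 676 then (if n \<le> 675 then 72305256252 else 72698207581) else 73095292910)) else (if n \<le> 680 then (if n \<le> 679 then (if n \<le> 678 then 73496573934 else 73902153255) else 74312094264) else (if n \<le> 682 then (if n \<le> 681 then 74726542428 else 75145563328) else 75569264384))) else (if n \<le> 689 then (if n \<le> 686 then (if n \<le> 685 then (if n \<le> 684 then 75997795785 else 76431226546) else 76869668267) else (if n \<le> 688 then (if n \<le> 687 then 77310668267 else 77751668267) else 78192668267)) else (if n \<le> 692 then (if n \<le> 691 then (if n \<le> 690 then 78633668267 else 79074668267) else 79515668267) else (if n \<le> 694 then (if n \<le> 693 then 79956668267 else 80397668267) else 80838668267))))"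

definition fQ_b29 :: "nat \<Rightarrow> int" where "fQ_b29 n = (if n \<le> 707 then (if n \<le> 701 then (if n \<le> 698 then (if n \<le> 697 then (if n \<le> 696 then 81279668267 else 81720668267) else 82161668267) else (if n \<le> 700 then (if n \<le> 699 then 82602668267 else 83043668267) else 83484668267)) else (if n \<le> 704 then (if n \<le> 703 then (if n \<le> 702 then 83925668267 else 84366668267) else 84807668267) else (if n \<le> 706 then (if n \<le> 705 then 85248668267 else 85689668267) else 86130668267))) else (if n \<le> 713 then (if n \<le> 710 then (if n \<le> 709 then (if n \<le> 708 then 86571668267 else 87012668267) else 87453668267) else (if n \<le> 712 then (if n \<le> 711 then 87894668267 else 88335668267) else 88776668267)) else (if n \<le> 716 then (if n \<le> 715 then (if n \<le> 714 then 89217668267 else 89658668267) else 90099668267) else (if n \<le> 718 then (if n \<le> 717 then 90540668267 else 90981668267) else 91422668267))))"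

definition fQ_b30 :: "nat \<Rightarrow> int" where "fQ_b30 n = (if n \<le> 731 then (if n \<le> 725 then (if n \<le> 722 then (if n \<le> 721 then (if n \<le> 720 then 91863668267 else 92304668267) else 92745668267) else (if n \<le> 724 then (if n \<le> 723 then 93186668267 else 93627668267) else 94068668267)) else (if n \<le> 728 then (if n \<le> 727 then (if n \<le> 726 then 94509668267 else 94950668267) else 95391668267) else (if n \<le> 730 then (if n \<le> 729 then 95832668267 else 96273668267) else 96714668267))) else (if n \<le> 737 then (if n \<le> 734 then (if n \<le> 733 then (if n \<le> 732 then 97155668267 else 97596668267) else 98037668267) else (if n \<le> 736 then (if n \<le> 735 then 98478668267 else 98919668267) else 99360668267)) else (if n \<le> 740 then (if n \<le> 739 then (if n \<le> 738 then 99801668267 else 100242668267) else 100683668267) else (if n \<le> 742 then (if n \<le> 741 then 101124668267 else 101565668267) else 102006668267))))"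

definition fQ_b31 :: "nat \<Rightarrow> int" where "fQ_b31 n = (if n \<le> 746 then (if n \<le> 745 then (if n \<le> 744 then 102447668267 else 102888668267) else 103329668267) else (if n \<le> 747 then 103770668267 else 104211668267))"

definition fQ :: "nat \<Rightarrow> int" where "fQ n = (if n \<le> 383 then (if n \<le> 191 then (if n \<le> 95 then (if n \<le> 47 then (if n \<le> 23 then fQ_b0 n else fQ_b1 n) else (if n \<le> 71 then fQ_b2 n else fQ_b3 n)) else (if n \<le> 143 then (if n \<le> 119 then fQ_b4 n else fQ_b5 n) else (if n \<le> 167 then fQ_b6 n else fQ_b7 n))) else (if n \<le> 287 then (if n \<le> 239 then (if n \<le> 215 then fQ_b8 n else fQ_b9 n) else (if n \<le> 263 then fQ_b10 n else fQ_b11 n)) else (if n \<le> 335 then (if n \<le> 311 then fQ_b12 n else fQ_b13 n) else (if n \<le> 359 then fQ_b14 n else fQ_b15 n)))) else (if n \<le> 575 then (if n \<le> 479 then (if n \<le> 431 then (if n \<le> 407 then fQ_b16 n else fQ_b17 n) else (if n \<le> 455 then fQ_b18 n else fQ_b19 n)) else (if n \<le> 527 then (if n \<le> 503 then fQ_b20 n else fQ_b21 n) else (if n \<le> 551 then fQ_b22 n else fQ_b23 n))) else (if n \<le> 671 then (if n \<le> 623 then (if n \<le> 599 then fQ_b24 n else fQ_b25 n) else (if n \<le> 647 then fQ_b26 n else fQ_b27 n)) else (if n \<le> 719 then (if n \<le> 695 then fQ_b28 n else fQ_b29 n) else (if n \<le> 743 then fQ_b30 n else fQ_b31 n)))))"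

lemmas fQ_defs = fQ_def fQ_b0_def fQ_b1_def fQ_b2_def fQ_b3_def fQ_b4_def fQ_b5_def fQ_b6_def fQ_b7_def fQ_b8_def fQ_b9_def fQ_b10_def fQ_b11_def fQ_b12_def fQ_b13_def fQ_b14_def fQ_b15_def fQ_b16_def fQ_b17_def fQ_b18_def fQ_b19_def fQ_b20_def fQ_b21_def fQ_b22_def fQ_b23_def fQ_b24_def fQ_b25_def fQ_b26_def fQ_b27_def fQ_b28_def fQ_b29_def fQ_b30_def fQ_b31_def

definition kk :: nat where "kk = 748"
definition tt :: nat where "tt = 428"
definition SS :: int where "SS = 10000"
definition fv :: int where "fv = 20003836249"

definition c2 :: "nat \<Rightarrow> nat \<Rightarrow> int \<Rightarrow> int \<Rightarrow> int \<Rightarrow> int \<Rightarrow> int \<Rightarrow> int \<Rightarrow> int \<Rightarrow> int \<Rightarrow> int \<Rightarrow> int \<Rightarrow> int \<Rightarrow> bool" where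
  "c2 j p u e u1 e1 pj pj1 ep ep1 pp qj qj1 =
    (0 \<le> e \<and> 0 \<le> u \<and> u - e \<le> 10000 \<and> 10000 \<le> u + e \<and> (j < 748 \<longrightarrow> u \<le> u1)
     \<and> (j < 428 \<longrightarrow> e1 \<le> e) \<and> (428 \<le> j \<and> j < 748 \<longrightarrow> e \<le> e1)
     \<and> pj = pj1 + e * e \<and> qj = qj1 + u * u
     \<and> j \<le> p \<and> p \<le> 748 \<and> 428 \<le> p \<and> e * e \<le> u * u \<and> ep * ep \<le> u * u
     \<and> (p = 748 \<or> u * u \<le> ep1 * ep1)
     \<and> int (p - j + 1) * (u * u) - (pp - pj1) \<le> 20003836249)"

definition c1 :: "nat \<Rightarrow> nat \<Rightarrow> bool" where
  "c1 j p = c2 j p (fU j) (fE j) (fU (j+1)) (fE (j+1)) (fP j) (fP (j-1)) (fE p) (fE (p+1)) (fP p) (fQ j) (fQ (j-1))"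

definition cnd :: "nat \<Rightarrow> bool" where "cnd j = c1 j (fp j)"

fun chkr :: "nat \<Rightarrow> bool" where
  "chkr n = (if n = 0 then True else cnd n \<and> chkr (n - 1))"

declare chkr.simps[simp del]

lemma chkr_0: "chkr 0 = True" by (subst chkr.simps) simp
lemma chkr_pos: "0 < n \<Longrightarrow> chkr n = (cnd n \<and> chkr (n - 1))" by (subst chkr.simps) simp

lemma chkr_sound: "chkr n \<Longrightarrow> 1 \<le> j \<Longrightarrow> j \<le> n \<Longrightarrow> cnd j"
proof (induction n)
  case 0 then show ?case by simp
next
  case (Suc n)
  have "cnd (Suc n) \<and> chkr n" using Suc.prems(1) chkr_pos[of "Suc n"] by simp
  then show ?case using Suc by (cases "j = Suc n") auto
qed

lemma chk_all: "chkr 748"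
  by (simp add: chkr_0 chkr_pos cnd_def c1_def c2_def fU_defs fE_defs fp_defs fP_defs fQ_defs cong: if_weak_cong)

lemma P0: "fP 0 = 0" by (simp add: fP_defs)
lemma Q0: "fQ 0 = 0" by (simp add: fQ_defs)
lemma rat: "286 * (fv + fP kk) \<le> 100 * fQ kk"
  by (simp add: fv_def kk_def fP_defs fQ_defs cong: if_weak_cong)

lemma C:
  assumes "1 \<le> j" "j \<le> kk"
  shows "0 \<le> fE j \<and> 0 \<le> fU j \<and> fU j - fE j \<le> SS \<and> SS \<le> fU j + fE j \<and> (j < kk \<longrightarrow> fU j \<le> fU (j+1))
     \<and> (j < tt \<longrightarrow> fE (j+1) \<le> fE j) \<and> (tt \<le> j \<and> j < kk \<longrightarrow> fE j \<le> fE (j+1))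
     \<and> fP j = fP (j-1) + fE j * fE j \<and> fQ j = fQ (j-1) + fU j * fU j
     \<and> j \<le> fp j \<and> fp j \<le> kk \<and> tt \<le> fp j \<and> fE j * fE j \<le> fU j * fU j \<and> fE (fp j) * fE (fp j) \<le> fU j * fU j
     \<and> (fp j = kk \<or> fU j * fU j \<le> fE (fp j + 1) * fE (fp j + 1))
     \<and> int (fp j - j + 1) * (fU j * fU j) - (fP (fp j) - fP (j-1)) \<le> fv"
proof -
  have "cnd j" using chkr_sound[OF chk_all] assms by (simp add: kk_def)
  then show ?thesis unfolding cnd_def c1_def c2_def kk_def tt_def SS_def fv_def .
qed

definition al :: "nat \<Rightarrow> real" where "al j = (real_of_int (fU j))^2"
definition dd :: "nat \<Rightarrow> real" where "dd j = (real_of_int (fE j))^2"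

lemma fac_int:
  assumes j: "1 \<le> j" "j \<le> kk"
  shows "(\<Sum>l=j..kk. max (fU j * fU j - fE l * fE l) 0) \<le> fv"
proof (rule fac_cert[where t = tt and P = fP and p = "fp j"])
  show "\<And>l. 1 \<le> l \<Longrightarrow> l < tt \<Longrightarrow> fE (l+1) \<le> fE l"
  proof -
    fix l assume "1 \<le> l" "l < tt"
    moreover have "tt \<le> kk" by (simp add: tt_def kk_def)
    ultimately show "fE (l+1) \<le> fE l" using C[of l] by simp
  qed
  show "\<And>l. tt \<le> l \<Longrightarrow> l < kk \<Longrightarrow> fE l \<le> fE (l+1)"
  proof -
    fix l assume "tt \<le> l" "l < kk"
    moreover have "1 \<le> tt" by (simp add: tt_def)
    ultimately show "fE l \<le> fE (l+1)" using C[of l] by simp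
  qed
  show "\<And>l. 1 \<le> l \<Longrightarrow> l \<le> kk \<Longrightarrow> 0 \<le> fE l" using C by blast
  show "\<And>l. 1 \<le> l \<Longrightarrow> l \<le> kk \<Longrightarrow> fP l = fP (l-1) + fE l * fE l" using C by blast
  show "1 \<le> j" using j by simp
  show "j \<le> fp j" using C[OF j] by blast
  show "fp j \<le> kk" using C[OF j] by blast
  show "tt \<le> fp j" using C[OF j] by blast
  show "fE j * fE j \<le> fU j * fU j" using C[OF j] by blast
  show "fE (fp j) * fE (fp j) \<le> fU j * fU j" using C[OF j] by blast
  show "fp j = kk \<or> fU j * fU j \<le> fE (fp j + 1) * fE (fp j + 1)" using C[OF j] by blast
  show "int (fp j - j + 1) * (fU j * fU j) - (fP (fp j) - fP (j-1)) \<le> fv" using C[OF j] by blast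
qed

lemma feas: "feasible kk al dd (real_of_int fv)"
  unfolding feasible_def
proof (intro conjI ballI allI impI)
  fix j assume j: "1 \<le> j \<and> j < kk"
  then have "fU j \<le> fU (j+1)" "0 \<le> fU j" using C[of j] by auto
  then show "al j \<le> al (j+1)" unfolding al_def by (simp add: power_mono)
next
  fix j l assume j: "j \<in> {1..kk}" and l: "l \<in> {1..kk}"
  have cj: "0 \<le> fE j \<and> 0 \<le> fU j \<and> fU j - fE j \<le> SS" using C[of j] j by auto
  have cl: "0 \<le> fE l \<and> 0 \<le> fU l \<and> SS \<le> fU l + fE l" using C[of l] l by auto
  have "fU j \<le> fU l + fE j + fE l" using cj cl by linarith
  then have "real_of_int (fU j) \<le> real_of_int (fU l) + real_of_int (fE j) + real_of_int (fE l)"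
    by linarith
  then show "sqrt (al j) \<le> sqrt (al l) + sqrt (dd j) + sqrt (dd l)"
    using cj cl unfolding al_def dd_def by simp
next
  fix j assume j: "j \<in> {1..kk}"
  have "(\<Sum>l=j..kk. max (al j - dd l) 0) = real_of_int (\<Sum>l=j..kk. max (fU j * fU j - fE l * fE l) 0)"
    unfolding al_def dd_def by (simp add: of_int_max power2_eq_square)
  also have "\<dots> \<le> real_of_int fv"
  proof -
    have "1 \<le> j" "j \<le> kk" using j by auto
    then have "(\<Sum>l=j..kk. max (fU j * fU j - fE l * fE l) 0) \<le> fv" by (rule fac_int)
    then show ?thesis by (simp only: of_int_le_iff)
  qed
  finally show "(\<Sum>l=j..kk. max (al j - dd l) 0) \<le> real_of_int fv" .
next
  fix j show "0 \<le> al j" unfolding al_def by simp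
next
  fix j show "0 \<le> dd j" unfolding dd_def by simp
next
  show "0 \<le> real_of_int fv" by (simp add: fv_def)
qed

lemma sumA: "(\<Sum>j=1..kk. al j) = real_of_int (fQ kk)"
proof -
  have "(\<Sum>j=1..kk. fU j * fU j) = fQ kk - fQ (1-1)"
    by (rule tele[of kk fQ]) (use C in auto)
  then have "(\<Sum>j=1..kk. fU j * fU j) = fQ kk" using Q0 by simp
  then show ?thesis unfolding al_def
    by (metis (no_types, lifting) of_int_mult of_int_sum power2_eq_square sum.cong)
qed

lemma sumD: "(\<Sum>j=1..kk. dd j) = real_of_int (fP kk)"
proof -
  have "(\<Sum>j=1..kk. fE j * fE j) = fP kk - fP (1-1)"
    by (rule tele[of kk fP]) (use C in auto)
  then have "(\<Sum>j=1..kk. fE j * fE j) = fP kk" using P0 by simp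
  then show ?thesis unfolding dd_def
    by (metis (no_types, lifting) of_int_mult of_int_sum power2_eq_square sum.cong)
qed

lemma zk: "ereal 2.86 \<le> zval kk"
proof -
  have D0: "0 \<le> fP kk"
  proof -
    have "(\<Sum>j=1..kk. dd j) \<ge> 0" unfolding dd_def by (intro sum_nonneg) simp
    then show ?thesis using sumD by simp
  qed
  have fpos: "0 < fv" by (simp add: fv_def)
  have pos: "0 < real_of_int fv + real_of_int (fP kk)" using fpos D0 by simp
  have p: "(al, dd, real_of_int fv) \<in> {(\<alpha>, d, f). feasible kk \<alpha> d f \<and> f + (\<Sum>j=1..kk. d j) > 0}"
    using feas pos sumD by simp
  have "(2.86::real) \<le> real_of_int (fQ kk) / (real_of_int fv + real_of_int (fP kk))"
  proof -
    have "286 * (real_of_int fv + real_of_int (fP kk)) \<le> 100 * real_of_int (fQ kk)"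
      using rat by (metis of_int_add of_int_le_iff of_int_mult of_int_numeral)
    then show ?thesis using pos by (simp add: field_simps)
  qed
  also have "\<dots> = (\<Sum>j=1..kk. fst (al, dd, real_of_int fv) j) / (snd (snd (al, dd, real_of_int fv)) + (\<Sum>j=1..kk. fst (snd (al, dd, real_of_int fv)) j))"
    using sumA sumD by simp
  finally have "ereal 2.86 \<le> ereal ((\<Sum>j=1..kk. fst (al, dd, real_of_int fv) j) / (snd (snd (al, dd, real_of_int fv)) + (\<Sum>j=1..kk. fst (snd (al, dd, real_of_int fv)) j)))"
    by simp
  also have "\<dots> \<le> zval kk"
    unfolding zval_def by (rule SUP_upper[OF p])
  finally show ?thesis .
qed

theorem lemma6:
  shows "(SUP k \<in> {1::nat..}. zval k) \<ge> ereal 2.86"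
proof -
  have "kk \<in> {1::nat..}" by (simp add: kk_def)
  then have "zval kk \<le> (SUP k \<in> {1::nat..}. zval k)" by (rule SUP_upper)
  then show ?thesis using zk by (rule order_trans[rotated])
qed

end
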